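(* Let $P$ be a finite graded poset with $\hat0$ and with a generalized EW-labeling $\lambda$. Then $Q_\lambda(P)$ is a Whitney dual of $P$.
   Context: Whitney numbers: $w_k(P)=\sum_{\rho(x)=k}\mu(\hat0,x)$, $W_k(P)=|\{x:\rho(x)=k\}|$; $P$ and $Q$ are Whitney duals if $|w_k(P)|=W_k(Q)$ and $|w_k(Q)|=W_k(P)$ for all $k\ge0$. An E-labeling is a map $\lambda$ from the cover relations of $P$ to a poset $\Lambda$; words of labels are read bottom to top; a chain is increasing if its word is strictly increasing and ascent-free if no consecutive labels $a,b$ satisfy $a<b$. ER-labeling: every closed interval has exactly one increasing maximal chain. Rank two switching property: for every saturated chain $\hat0=x_0\lessdot\cdots\lessdot x_k$ and $i$ with $\lambda(x_{i-1}\lessdot x_i)<\lambda(x_i\lessdot x_{i+1})$ there is a unique $x_i'$ with $x_{i-1}\lessdot x_i'\lessdot x_{i+1}$, $\lambda(x_{i-1}\lessdot x_i')=\lambda(x_i\lessdot x_{i+1})$, $\lambda(x_i'\lessdot x_{i+1})=\lambda(x_{i-1}\lessdot x_i)$. The quadratic exchange $U_i$ replaces $x_i$ by $x_i'$ at such an ascent (identity otherwise); $\mathbf c_1\sim_\lambda\mathbf c_2$ for maximal chains of an interval means they are connected by such exchanges (forwards or backwards) within that interval. A generalized EW-labeling is an ER-labeling with the rank two switching property satisfying the braid relation ($U_iU_{i+1}U_i(\mathbf c)=U_{i+1}U_iU_{i+1}(\mathbf c)$ whenever $\mathbf c$ has strictly increasing labels at positions $i,i+1,i+2$) and the cancellative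 property (for $z<x<y$, $\mathbf c$ a maximal chain of $[z,x]$ and $\mathbf c_1,\mathbf c_2$ maximal chains of $[x,y]$: $\mathbf c\cup\mathbf c_1\sim_\lambda\mathbf c\cup\mathbf c_2$ implies $\mathbf c_1\sim_\lambda\mathbf c_2$). $Q_\lambda(P)$: $C(P)$ is the set of saturated chains starting at $\hat0$, ordered by inclusion; for $\mathbf c_1,\mathbf c_2\in C(P)$, $\mathbf c_1\sim\mathbf c_2$ iff they have the same top element $y$ and $\mathbf c_1\sim_\lambda\mathbf c_2$ in $[\hat0,y]$. $Q_\lambda(P)$ is the set of classes ordered by the transitive closure of: $X\le Y$ if some $\mathbf c\in X$, $\mathbf d\in Y$ have $\mathbf c\subseteq\mathbf d$. *)

theory Defs
  imports Main
begin

definition porder :: "'a set \<Rightarrow> ('a \<Rightarrow> 'a \<Rightarrow> bool) \<Rightarrow> bool" where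
  "porder P le \<longleftrightarrow> (\<forall>x\<in>P. le x x) \<and> (\<forall>x\<in>P. \<forall>y\<in>P. le x y \<and> le y x \<longrightarrow> x = y)
     \<and> (\<forall>x\<in>P. \<forall>y\<in>P. \<forall>w\<in>P. le x y \<and> le y w \<longrightarrow> le x w)"

definition lt :: "('a \<Rightarrow> 'a \<Rightarrow> bool) \<Rightarrow> 'a \<Rightarrow> 'a \<Rightarrow> bool" where
  "lt le x y \<longleftrightarrow> le x y \<and> x \<noteq> y"

definition covers :: "'a set \<Rightarrow> ('a \<Rightarrow> 'a \<Rightarrow> bool) \<Rightarrow> 'a \<Rightarrow> 'a \<Rightarrow> bool" where
  "covers P le x y \<longleftrightarrow> x \<in> P \<and> y \<in> P \<and> lt le x y \<and> \<not> (\<exists>w\<in>P. lt le x w \<and> lt le w y)"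

definition sat_chain :: "'a set \<Rightarrow> ('a \<Rightarrow> 'a \<Rightarrow> bool) \<Rightarrow> 'a list \<Rightarrow> bool" where
  "sat_chain P le c \<longleftrightarrow> c \<noteq> [] \<and> set c \<subseteq> P \<and>
     (\<forall>i. Suc i < length c \<longrightarrow> covers P le (c ! i) (c ! Suc i))"

definition max_chain :: "'a set \<Rightarrow> ('a \<Rightarrow> 'a \<Rightarrow> bool) \<Rightarrow> 'a \<Rightarrow> 'a \<Rightarrow> 'a list \<Rightarrow> bool" where
  "max_chain P le x y c \<longleftrightarrow> sat_chain P le c \<and> hd c = x \<and> last c = y"

definition has_zero :: "'a set \<Rightarrow> ('a \<Rightarrow> 'a \<Rightarrow> bool) \<Rightarrow> 'a \<Rightarrow> bool" where
  "has_zero P le z \<longleftrightarrow> z \<in> P \<and> (\<forall>x\<in>P. le z x)"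

definition graded_zero :: "'a set \<Rightarrow> ('a \<Rightarrow> 'a \<Rightarrow> bool) \<Rightarrow> 'a \<Rightarrow> bool" where
  "graded_zero P le z \<longleftrightarrow> porder P le \<and> has_zero P le z \<and>
     (\<exists>\<rho> :: 'a \<Rightarrow> nat. \<rho> z = 0 \<and> (\<forall>x y. covers P le x y \<longrightarrow> \<rho> y = Suc (\<rho> x)))"

text \<open>Rank of x: length of a longest chain from the minimum z to x
  (in a graded poset every maximal chain of [z,x] has this length).\<close>
definition rank :: "'a set \<Rightarrow> ('a \<Rightarrow> 'a \<Rightarrow> bool) \<Rightarrow> 'a \<Rightarrow> 'a \<Rightarrow> nat" where
  "rank P le z x = Max {length c - 1 | c. c \<noteq> [] \<and> set c \<subseteq> P \<and> sorted_wrt (lt le) c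
                                     \<and> hd c = z \<and> last c = x}"

definition mobius :: "'a set \<Rightarrow> ('a \<Rightarrow> 'a \<Rightarrow> bool) \<Rightarrow> 'a \<Rightarrow> 'a \<Rightarrow> int" where
  "mobius P le x y = (THE f :: 'a \<Rightarrow> int. (\<forall>w. f w \<noteq> 0 \<longrightarrow> w \<in> P \<and> le x w) \<and>
      (\<forall>w\<in>P. le x w \<longrightarrow> (\<Sum>u\<in>{u\<in>P. le x u \<and> le u w}. f u) = (if w = x then 1 else 0))) y"

definition whitney_w :: "'a set \<Rightarrow> ('a \<Rightarrow> 'a \<Rightarrow> bool) \<Rightarrow> 'a \<Rightarrow> nat \<Rightarrow> int" where
  "whitney_w P le z k = (\<Sum>x\<in>{x\<in>P. rank P le z x = k}. mobius P le z x)"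

definition whitney_W :: "'a set \<Rightarrow> ('a \<Rightarrow> 'a \<Rightarrow> bool) \<Rightarrow> 'a \<Rightarrow> nat \<Rightarrow> nat" where
  "whitney_W P le z k = card {x\<in>P. rank P le z x = k}"

definition whitney_duals ::
  "'a set \<Rightarrow> ('a \<Rightarrow> 'a \<Rightarrow> bool) \<Rightarrow> 'a \<Rightarrow> 'b set \<Rightarrow> ('b \<Rightarrow> 'b \<Rightarrow> bool) \<Rightarrow> 'b \<Rightarrow> bool" where
  "whitney_duals P le z Q qle zq \<longleftrightarrow>
     (\<forall>k. \<bar>whitney_w P le z k\<bar> = int (whitney_W Q qle zq k) \<and>
          \<bar>whitney_w Q qle zq k\<bar> = int (whitney_W P le z k))"

definition word :: "('a \<Rightarrow> 'a \<Rightarrow> 'l) \<Rightarrow> 'a list \<Rightarrow> 'l list" where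
  "word lam c = map (\<lambda>i. lam (c ! i) (c ! Suc i)) [0..<length c - 1]"

definition increasing :: "('l \<Rightarrow> 'l \<Rightarrow> bool) \<Rightarrow> ('a \<Rightarrow> 'a \<Rightarrow> 'l) \<Rightarrow> 'a list \<Rightarrow> bool" where
  "increasing lle lam c \<longleftrightarrow> sorted_wrt (lt lle) (word lam c)"

definition ER_labeling :: "'a set \<Rightarrow> ('a \<Rightarrow> 'a \<Rightarrow> bool) \<Rightarrow> ('l \<Rightarrow> 'l \<Rightarrow> bool) \<Rightarrow> ('a \<Rightarrow> 'a \<Rightarrow> 'l) \<Rightarrow> bool" where
  "ER_labeling P le lle lam \<longleftrightarrow>
     (\<forall>x\<in>P. \<forall>y\<in>P. le x y \<longrightarrow> (\<exists>!c. max_chain P le x y c \<and> increasing lle lam c))"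

definition ascent :: "('l \<Rightarrow> 'l \<Rightarrow> bool) \<Rightarrow> ('a \<Rightarrow> 'a \<Rightarrow> 'l) \<Rightarrow> 'a list \<Rightarrow> nat \<Rightarrow> bool" where
  "ascent lle lam c i \<longleftrightarrow> 0 < i \<and> Suc i < length c \<and>
     lt lle (lam (c ! (i - 1)) (c ! i)) (lam (c ! i) (c ! Suc i))"

definition swap_ok :: "'a set \<Rightarrow> ('a \<Rightarrow> 'a \<Rightarrow> bool) \<Rightarrow> ('a \<Rightarrow> 'a \<Rightarrow> 'l) \<Rightarrow> 'a \<Rightarrow> 'a \<Rightarrow> 'a \<Rightarrow> 'a \<Rightarrow> bool" where
  "swap_ok P le lam u v w v' \<longleftrightarrow> covers P le u v' \<and> covers P le v' w \<and>
     lam u v' = lam v w \<and> lam v' w = lam u v"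

definition rank_two_switching ::
  "'a set \<Rightarrow> ('a \<Rightarrow> 'a \<Rightarrow> bool) \<Rightarrow> 'a \<Rightarrow> ('l \<Rightarrow> 'l \<Rightarrow> bool) \<Rightarrow> ('a \<Rightarrow> 'a \<Rightarrow> 'l) \<Rightarrow> bool" where
  "rank_two_switching P le z lle lam \<longleftrightarrow>
     (\<forall>c i. sat_chain P le c \<and> hd c = z \<and> ascent lle lam c i \<longrightarrow>
        (\<exists>!v'. swap_ok P le lam (c ! (i - 1)) (c ! i) (c ! Suc i) v'))"

definition U :: "'a set \<Rightarrow> ('a \<Rightarrow> 'a \<Rightarrow> bool) \<Rightarrow> ('l \<Rightarrow> 'l \<Rightarrow> bool) \<Rightarrow> ('a \<Rightarrow> 'a \<Rightarrow> 'l)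
                 \<Rightarrow> nat \<Rightarrow> 'a list \<Rightarrow> 'a list" where
  "U P le lle lam i c = (if ascent lle lam c i
      then c[i := (THE v'. swap_ok P le lam (c ! (i - 1)) (c ! i) (c ! Suc i) v')] else c)"

definition braid_relation ::
  "'a set \<Rightarrow> ('a \<Rightarrow> 'a \<Rightarrow> bool) \<Rightarrow> 'a \<Rightarrow> ('l \<Rightarrow> 'l \<Rightarrow> bool) \<Rightarrow> ('a \<Rightarrow> 'a \<Rightarrow> 'l) \<Rightarrow> bool" where
  "braid_relation P le z lle lam \<longleftrightarrow>
     (\<forall>c i. sat_chain P le c \<and> hd c = z \<and> 0 < i \<and> i + 2 < length c \<and>
        lt lle (lam (c ! (i - 1)) (c ! i)) (lam (c ! i) (c ! (i + 1))) \<and>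
        lt lle (lam (c ! i) (c ! (i + 1))) (lam (c ! (i + 1)) (c ! (i + 2))) \<longrightarrow>
        U P le lle lam i (U P le lle lam (i + 1) (U P le lle lam i c)) =
        U P le lle lam (i + 1) (U P le lle lam i (U P le lle lam (i + 1) c)))"

definition xstep :: "'a set \<Rightarrow> ('a \<Rightarrow> 'a \<Rightarrow> bool) \<Rightarrow> ('l \<Rightarrow> 'l \<Rightarrow> bool) \<Rightarrow> ('a \<Rightarrow> 'a \<Rightarrow> 'l)
                     \<Rightarrow> 'a list \<Rightarrow> 'a list \<Rightarrow> bool" where
  "xstep P le lle lam c d \<longleftrightarrow> (\<exists>i v'. ascent lle lam c i \<and>
      swap_ok P le lam (c ! (i - 1)) (c ! i) (c ! Suc i) v' \<and> d = c[i := v'])"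

definition lam_equiv :: "'a set \<Rightarrow> ('a \<Rightarrow> 'a \<Rightarrow> bool) \<Rightarrow> ('l \<Rightarrow> 'l \<Rightarrow> bool) \<Rightarrow> ('a \<Rightarrow> 'a \<Rightarrow> 'l)
                         \<Rightarrow> 'a \<Rightarrow> 'a \<Rightarrow> 'a list \<Rightarrow> 'a list \<Rightarrow> bool" where
  "lam_equiv P le lle lam x y c d \<longleftrightarrow> max_chain P le x y c \<and> max_chain P le x y d \<and>
     (\<lambda>c1 c2. max_chain P le x y c1 \<and> max_chain P le x y c2 \<and>
        (xstep P le lle lam c1 c2 \<or> xstep P le lle lam c2 c1))\<^sup>*\<^sup>* c d"

definition cancellative :: "'a set \<Rightarrow> ('a \<Rightarrow> 'a \<Rightarrow> bool) \<Rightarrow> ('l \<Rightarrow> 'l \<Rightarrow> bool) \<Rightarrow> ('a \<Rightarrow> 'a \<Rightarrow> 'l) \<Rightarrow> bool" where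
  "cancellative P le lle lam \<longleftrightarrow>
     (\<forall>w x y c c1 c2. w \<in> P \<and> x \<in> P \<and> y \<in> P \<and> lt le w x \<and> lt le x y \<and>
        max_chain P le w x c \<and> max_chain P le x y c1 \<and> max_chain P le x y c2 \<and>
        lam_equiv P le lle lam w y (c @ tl c1) (c @ tl c2) \<longrightarrow>
        lam_equiv P le lle lam x y c1 c2)"

definition generalized_EW_labeling ::
  "'a set \<Rightarrow> ('a \<Rightarrow> 'a \<Rightarrow> bool) \<Rightarrow> 'a \<Rightarrow> ('l \<Rightarrow> 'l \<Rightarrow> bool) \<Rightarrow> ('a \<Rightarrow> 'a \<Rightarrow> 'l) \<Rightarrow> bool" where
  "generalized_EW_labeling P le z lle lam \<longleftrightarrow>
     ER_labeling P le lle lam \<and> rank_two_switching P le z lle lam \<and>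
     braid_relation P le z lle lam \<and> cancellative P le lle lam"

definition CP :: "'a set \<Rightarrow> ('a \<Rightarrow> 'a \<Rightarrow> bool) \<Rightarrow> 'a \<Rightarrow> 'a list set" where
  "CP P le z = {c. sat_chain P le c \<and> hd c = z}"

definition Qrel :: "'a set \<Rightarrow> ('a \<Rightarrow> 'a \<Rightarrow> bool) \<Rightarrow> 'a \<Rightarrow> ('l \<Rightarrow> 'l \<Rightarrow> bool) \<Rightarrow> ('a \<Rightarrow> 'a \<Rightarrow> 'l)
                    \<Rightarrow> ('a list \<times> 'a list) set" where
  "Qrel P le z lle lam = {(c, d). c \<in> CP P le z \<and> d \<in> CP P le z \<and> last c = last d \<and>
                                 lam_equiv P le lle lam z (last c) c d}"

definition Qcarrier :: "'a set \<Rightarrow> ('a \<Rightarrow> 'a \<Rightarrow> bool) \<Rightarrow> 'a \<Rightarrow> ('l \<Rightarrow> 'l \<Rightarrow> bool) \<Rightarrow> ('a \<Rightarrow> 'a \<Rightarrow> 'l)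
                        \<Rightarrow> 'a list set set" where
  "Qcarrier P le z lle lam = CP P le z // Qrel P le z lle lam"

definition Qle :: "'a set \<Rightarrow> ('a \<Rightarrow> 'a \<Rightarrow> bool) \<Rightarrow> 'a \<Rightarrow> ('l \<Rightarrow> 'l \<Rightarrow> bool) \<Rightarrow> ('a \<Rightarrow> 'a \<Rightarrow> 'l)
                   \<Rightarrow> 'a list set \<Rightarrow> 'a list set \<Rightarrow> bool" where
  "Qle P le z lle lam = (\<lambda>X Y. X \<in> Qcarrier P le z lle lam \<and> Y \<in> Qcarrier P le z lle lam \<and>
                                (\<exists>c\<in>X. \<exists>d\<in>Y. set c \<subseteq> set d))\<^sup>+\<^sup>+"

end

theory Submission
  imports Defs
begin


lemma porderD:
  assumes "porder A r"
  shows "x \<in> A \<Longrightarrow> r x x"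
    and "x \<in> A \<Longrightarrow> y \<in> A \<Longrightarrow> r x y \<Longrightarrow> r y x \<Longrightarrow> x = y"
    and "x \<in> A \<Longrightarrow> y \<in> A \<Longrightarrow> w \<in> A \<Longrightarrow> r x y \<Longrightarrow> r y w \<Longrightarrow> r x w"
  using assms unfolding porder_def by blast+

lemma lt_trans:
  assumes "porder A r" "x \<in> A" "y \<in> A" "w \<in> A" "lt r x y" "lt r y w"
  shows "lt r x w"
  using assms porderD[OF assms(1)] unfolding lt_def by metis

lemma lt_le_trans:
  assumes "porder A r" "x \<in> A" "y \<in> A" "w \<in> A" "lt r x y" "r y w"
  shows "lt r x w"
  using assms porderD[OF assms(1)] unfolding lt_def by metis

lemma le_lt_trans:
  assumes "porder A r" "x \<in> A" "y \<in> A" "w \<in> A" "r x y" "lt r y w"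
  shows "lt r x w"
  using assms porderD[OF assms(1)] unfolding lt_def by metis

lemma sat_chainD:
  assumes "sat_chain A r c"
  shows "c \<noteq> []" "set c \<subseteq> A" "\<And>i. Suc i < length c \<Longrightarrow> covers A r (c ! i) (c ! Suc i)"
  using assms unfolding sat_chain_def by auto

lemma sat_chain_single: "x \<in> A \<Longrightarrow> sat_chain A r [x]"
  unfolding sat_chain_def by auto

lemma sat_chain_nth_in: "sat_chain A r c \<Longrightarrow> i < length c \<Longrightarrow> c ! i \<in> A"
  unfolding sat_chain_def by auto

lemma sat_chain_append:
  assumes "sat_chain A r p" "sat_chain A r s" "last p = hd s"
  shows "sat_chain A r (p @ tl s)"
proof -
  have lp: "length p > 0" "length s > 0" using assms sat_chainD by auto
  have sp: "s = hd s # tl s" using lp by (cases s) auto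
  have pl: "p ! (length p - 1) = last p" using lp by (simp add: last_conv_nth)
  show ?thesis unfolding sat_chain_def
  proof (intro conjI allI impI)
    show "p @ tl s \<noteq> []" using lp by auto
    show "set (p @ tl s) \<subseteq> A" using assms(1,2) lp unfolding sat_chain_def by (auto dest: list.set_sel(2))
  next
    fix i assume i: "Suc i < length (p @ tl s)"
    show "covers A r ((p @ tl s) ! i) ((p @ tl s) ! Suc i)"
    proof (cases "Suc i < length p")
      case True then show ?thesis using assms(1) sat_chainD by (simp add: nth_append)
    next
      case False
      then have ge: "i \<ge> length p - 1" by auto
      define k where "k = i - (length p - 1)"
      have ik: "i = length p - 1 + k" using ge k_def by auto
      have "Suc k < length s" using i lp ik by auto
      then have cv: "covers A r (s ! k) (s ! Suc k)" using sat_chainD(3)[OF assms(2)] by auto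
      have e1: "(p @ tl s) ! i = s ! k"
      proof (cases k)
        case 0 then show ?thesis using ik lp pl assms(3) by (simp add: nth_append hd_conv_nth)
      next
        case (Suc k') then show ?thesis using ik lp \<open>Suc k < length s\<close> by (simp add: nth_append nth_tl)
      qed
      have e2: "(p @ tl s) ! Suc i = s ! Suc k"
        using ik lp \<open>Suc k < length s\<close> by (simp add: nth_append nth_tl)
      show ?thesis using cv e1 e2 by simp
    qed
  qed
qed

lemma sat_chain_take:
  assumes "sat_chain A r c" "j < length c"
  shows "sat_chain A r (take (Suc j) c)"
  using assms unfolding sat_chain_def by (auto dest: in_set_takeD)

lemma sat_chain_drop:
  assumes "sat_chain A r c" "j < length c"
  shows "sat_chain A r (drop j c)"
  using assms unfolding sat_chain_def by (auto dest: in_set_dropD)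

lemma take_drop_join:
  assumes "j < length c"
  shows "take (Suc j) c @ tl (drop j c) = c"
proof -
  have "drop j c = c ! j # drop (Suc j) c" using assms by (simp add: Cons_nth_drop_Suc)
  then have "tl (drop j c) = drop (Suc j) c" by simp
  then show ?thesis by simp
qed

lemma last_take_Suc: "j < length c \<Longrightarrow> last (take (Suc j) c) = c ! j"
  by (metis last_snoc take_Suc_conv_app_nth)

lemma hd_drop_nth: "j < length c \<Longrightarrow> hd (drop j c) = c ! j"
  by (simp add: hd_drop_conv_nth)

lemma join_nth_right:
  assumes "p \<noteq> []" "s \<noteq> []" "last p = hd s" "m < length s"
  shows "(p @ tl s) ! (length p - 1 + m) = s ! m"
proof (cases m)
  case 0 then show ?thesis using assms by (simp add: nth_append last_conv_nth hd_conv_nth)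
next
  case (Suc k)
  have lp: "length p \<ge> 1" using assms by (cases p) auto
  have nl: "\<not> length p - 1 + m < length p" using Suc lp by linarith
  have "(p @ tl s) ! (length p - 1 + m) = tl s ! (length p - 1 + m - length p)"
    by (simp only: nth_append nl if_False)
  also have "length p - 1 + m - length p = k" using Suc lp by simp
  finally show ?thesis using Suc assms by (simp add: nth_tl)
qed

lemma join_nth_left:
  assumes "m < length p"
  shows "(p @ tl s) ! m = p ! m"
  using assms by (simp add: nth_append)

lemma covers_lt: "covers A r x y \<Longrightarrow> lt r x y"
  unfolding covers_def by auto

lemma sat_chain_exists:
  assumes fin: "finite A" and po: "porder A r"
  shows "x \<in> A \<Longrightarrow> y \<in> A \<Longrightarrow> r x y \<Longrightarrow> \<exists>c. sat_chain A r c \<and> hd c = x \<and> last c = y"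
proof (induction "card {w\<in>A. lt r x w \<and> lt r w y}" arbitrary: x y rule: less_induct)
  case less
  show ?case
  proof (cases "x = y")
    case True then show ?thesis using less.prems by (intro exI[of _ "[x]"]) (auto simp: sat_chain_def)
  next
    case False
    show ?thesis
    proof (cases "\<exists>w\<in>A. lt r x w \<and> lt r w y")
      case False2: False
      then have "covers A r x y" using less.prems False unfolding covers_def lt_def by auto
      then show ?thesis by (intro exI[of _ "[x,y]"]) (auto simp: sat_chain_def covers_def nth_Cons')
    next
      case True
      then obtain w where w: "w \<in> A" "lt r x w" "lt r w y" by blast
      have sub1: "{v\<in>A. lt r x v \<and> lt r v w} \<subset> {v\<in>A. lt r x v \<and> lt r v y}"
      proof (rule psubsetI)
        show "{v\<in>A. lt r x v \<and> lt r v w} \<subseteq> {v\<in>A. lt r x v \<and> lt r v y}"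
          using w less.prems by (auto intro: lt_trans[OF po])
        have "w \<in> {v\<in>A. lt r x v \<and> lt r v y}" "w \<notin> {v\<in>A. lt r x v \<and> lt r v w}"
          using w by (auto simp: lt_def)
        then show "{v\<in>A. lt r x v \<and> lt r v w} \<noteq> {v\<in>A. lt r x v \<and> lt r v y}" by blast
      qed
      have sub2: "{v\<in>A. lt r w v \<and> lt r v y} \<subset> {v\<in>A. lt r x v \<and> lt r v y}"
      proof (rule psubsetI)
        show "{v\<in>A. lt r w v \<and> lt r v y} \<subseteq> {v\<in>A. lt r x v \<and> lt r v y}"
          using w less.prems by (auto intro: lt_trans[OF po])
        have "w \<in> {v\<in>A. lt r x v \<and> lt r v y}" "w \<notin> {v\<in>A. lt r w v \<and> lt r v y}"
          using w by (auto simp: lt_def)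
        then show "{v\<in>A. lt r w v \<and> lt r v y} \<noteq> {v\<in>A. lt r x v \<and> lt r v y}" by blast
      qed
      have f: "finite {v\<in>A. lt r x v \<and> lt r v y}" using fin by auto
      obtain c1 where c1: "sat_chain A r c1" "hd c1 = x" "last c1 = w"
        using less.hyps[OF psubset_card_mono[OF f sub1]] less.prems w by (auto simp: lt_def)
      obtain c2 where c2: "sat_chain A r c2" "hd c2 = w" "last c2 = y"
        using less.hyps[OF psubset_card_mono[OF f sub2]] less.prems w by (auto simp: lt_def)
      have ne: "c1 \<noteq> []" "c2 \<noteq> []" using c1 c2 sat_chainD by auto
      have "sat_chain A r (c1 @ tl c2)" using sat_chain_append[OF c1(1) c2(1)] c1 c2 by auto
      moreover have "hd (c1 @ tl c2) = x" using ne c1 by auto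
      moreover have "last (c1 @ tl c2) = y"
      proof (cases "tl c2 = []")
        case True then have "c2 = [w]" using ne c2 by (cases c2) auto
        then show ?thesis using c1 c2 ne by auto
      next
        case False then show ?thesis using c2 ne by (cases c2) auto
      qed
      ultimately show ?thesis by blast
    qed
  qed
qed



lemma graded_nth:
  assumes gr: "\<And>x y. covers A r x y \<Longrightarrow> f y = Suc (f x)"
    and c: "sat_chain A r c"
  shows "i < length c \<Longrightarrow> f (c ! i) = f (hd c) + i"
proof (induction i)
  case 0 then show ?case using c sat_chainD by (simp add: hd_conv_nth)
next
  case (Suc i)
  then have "covers A r (c ! i) (c ! Suc i)" using sat_chainD(3)[OF c] by auto
  then show ?case using Suc gr by auto
qed

lemma graded_last:
  assumes gr: "\<And>x y. covers A r x y \<Longrightarrow> f y = Suc (f x)"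
    and c: "sat_chain A r c"
  shows "f (last c) = f (hd c) + (length c - 1)"
proof -
  have "c \<noteq> []" using c sat_chainD by auto
  then show ?thesis using graded_nth[where A=A and r=r and f=f, OF gr c, of "length c - 1"]
    by (simp add: last_conv_nth)
qed

lemma sat_chain_lt:
  assumes po: "porder A r" and c: "sat_chain A r c"
  shows "i < k \<Longrightarrow> k < length c \<Longrightarrow> lt r (c ! i) (c ! k)"
proof (induction k)
  case 0 then show ?case by linarith
next
  case (Suc k)
  have cv: "lt r (c ! k) (c ! Suc k)" using covers_lt[OF sat_chainD(3)[OF c]] Suc.prems by simp
  show ?case
  proof (cases "i = k")
    case True then show ?thesis using cv by simp
  next
    case False
    then have "lt r (c ! i) (c ! k)" using Suc by auto
    then show ?thesis using lt_trans[OF po _ _ _ _ cv] sat_chain_nth_in[OF c] Suc.prems by auto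
  qed
qed

lemma sat_chain_sorted:
  assumes po: "porder A r" and c: "sat_chain A r c"
  shows "sorted_wrt (lt r) c"
  using sat_chain_lt[OF po c] by (simp add: sorted_wrt_iff_nth_less)

lemma sat_chain_le:
  assumes po: "porder A r" and c: "sat_chain A r c"
  shows "i \<le> k \<Longrightarrow> k < length c \<Longrightarrow> r (c ! i) (c ! k)"
  using sat_chain_lt[OF po c, of i k] porderD(1)[OF po] sat_chain_nth_in[OF c]
  by (cases "i = k") (auto simp: lt_def)

lemma graded_lt:
  assumes fin: "finite A" and po: "porder A r"
    and gr: "\<And>x y. covers A r x y \<Longrightarrow> f y = Suc (f x)"
    and xy: "x \<in> A" "y \<in> A" "lt r x y"
  shows "f x < f y"
proof -
  obtain c where c: "sat_chain A r c" "hd c = x" "last c = y"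
    using sat_chain_exists[OF fin po] xy by (auto simp: lt_def)
  have "length c \<noteq> 1"
  proof
    assume "length c = 1" then have "hd c = last c" by (cases c) auto
    then show False using c xy by (simp add: lt_def)
  qed
  moreover have "length c \<noteq> 0" using c sat_chainD by auto
  ultimately have "length c > 1" by linarith
  then show ?thesis using graded_last[where A=A and r=r and f=f, OF gr c(1)] c by auto
qed

lemma graded_le:
  assumes fin: "finite A" and po: "porder A r"
    and gr: "\<And>x y. covers A r x y \<Longrightarrow> f y = Suc (f x)"
    and xy: "x \<in> A" "y \<in> A" "r x y"
  shows "f x \<le> f y"
  using graded_lt[where A=A and r=r and f=f, OF fin po gr xy(1,2)] xy by (cases "x = y") (auto simp: lt_def)

lemma sorted_lt_f:
  assumes fin: "finite A" and po: "porder A r"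
    and gr: "\<And>x y. covers A r x y \<Longrightarrow> f y = Suc (f x)"
    and c: "set c \<subseteq> A" "sorted_wrt (lt r) c"
  shows "i < length c \<Longrightarrow> f (c ! 0) + i \<le> f (c ! i)"
proof (induction i)
  case 0 then show ?case by simp
next
  case (Suc i)
  have "lt r (c ! i) (c ! Suc i)" using c(2) Suc.prems by (simp add: sorted_wrt_iff_nth_less)
  then have "f (c ! i) < f (c ! Suc i)"
    using graded_lt[where A=A and r=r and f=f, OF fin po gr] c(1) Suc.prems by (meson Suc_lessD nth_mem subsetD)
  then show ?case using Suc by auto
qed

lemma rank_graded:
  assumes fin: "finite A" and po: "porder A r" and hz: "has_zero A r a"
    and gr: "\<And>x y. covers A r x y \<Longrightarrow> f y = Suc (f x)" and fa: "f a = 0"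
    and x: "x \<in> A"
  shows "rank A r a x = f x"
proof -
  define S where "S = {length c - 1 | c. c \<noteq> [] \<and> set c \<subseteq> A \<and> sorted_wrt (lt r) c
                                     \<and> hd c = a \<and> last c = x}"
  have a: "a \<in> A" "r a x" using hz x unfolding has_zero_def by auto
  obtain c where c: "sat_chain A r c" "hd c = a" "last c = x"
    using sat_chain_exists[OF fin po a(1) x a(2)] by blast
  have "length c - 1 \<in> S" unfolding S_def using c sat_chainD[OF c(1)] sat_chain_sorted[OF po c(1)] by blast
  moreover have "length c - 1 = f x" using graded_last[where A=A and r=r and f=f, OF gr c(1)] c fa by simp
  moreover have "\<forall>n\<in>S. n \<le> f x"
  proof
    fix n assume "n \<in> S"
    then obtain d where d: "n = length d - 1" "d \<noteq> []" "set d \<subseteq> A" "sorted_wrt (lt r) d"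
      "hd d = a" "last d = x" unfolding S_def by blast
    have "f (d ! 0) + (length d - 1) \<le> f (d ! (length d - 1))"
      using sorted_lt_f[where A=A and r=r and f=f, OF fin po gr d(3,4), of "length d - 1"] d(2) by simp
    then show "n \<le> f x" using d fa by (simp add: hd_conv_nth last_conv_nth)
  qed
  moreover have "finite S" using \<open>\<forall>n\<in>S. n \<le> f x\<close> by (meson finite_atMost finite_subset atMost_iff subsetI)
  ultimately have "Max S = f x" by (metis Max_eqI)
  then show ?thesis unfolding rank_def S_def by simp
qed

section \<open>Moebius function characterization\<close>

lemma mobius_eqI:
  assumes fin: "finite A" and po: "porder A r" and aA: "a \<in> A"
    and sup: "\<And>w. g w \<noteq> 0 \<Longrightarrow> w \<in> A \<and> r a w"
    and rec: "\<And>w. w \<in> A \<Longrightarrow> r a w \<Longrightarrow>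
         (\<Sum>u\<in>{u\<in>A. r a u \<and> r u w}. g u) = (if w = a then 1 else 0)"
  shows "mobius A r a y = g y"
proof -
  define Pr where "Pr = (\<lambda>f :: 'a \<Rightarrow> int. (\<forall>w. f w \<noteq> 0 \<longrightarrow> w \<in> A \<and> r a w) \<and>
      (\<forall>w\<in>A. r a w \<longrightarrow> (\<Sum>u\<in>{u\<in>A. r a u \<and> r u w}. f u) = (if w = a then 1 else 0)))"
  have Pg: "Pr g" unfolding Pr_def using sup rec by blast
  have uniq: "h = g" if Ph: "Pr h" for h
  proof
    fix w
    show "h w = g w"
    proof (induction "card {v\<in>A. r v w}" arbitrary: w rule: less_induct)
      case less
      show ?case
      proof (cases "w \<in> A \<and> r a w")
        case False
        then show ?thesis using Ph Pg unfolding Pr_def by metis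
      next
        case True
        define S where "S = {u\<in>A. r a u \<and> r u w}"
        have fS: "finite S" using fin S_def by auto
        have wS: "w \<in> S" using True porderD(1)[OF po] S_def by auto
        have IH: "h u = g u" if "u \<in> S - {w}" for u
        proof -
          have u: "u \<in> A" "r u w" "u \<noteq> w" using that S_def by auto
          have "{v\<in>A. r v u} \<subset> {v\<in>A. r v w}"
          proof (rule psubsetI)
            show "{v\<in>A. r v u} \<subseteq> {v\<in>A. r v w}"
              using u True porderD(3)[OF po] by blast
            have "w \<notin> {v\<in>A. r v u}" using u True porderD(2)[OF po] by blast
            moreover have "w \<in> {v\<in>A. r v w}" using True porderD(1)[OF po] by blast
            ultimately show "{v\<in>A. r v u} \<noteq> {v\<in>A. r v w}" by blast
          qed
          then have "card {v\<in>A. r v u} < card {v\<in>A. r v w}"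
            using fin by (simp add: psubset_card_mono)
          then show ?thesis using less by blast
        qed
        have sh: "(\<Sum>u\<in>S. h u) = h w + (\<Sum>u\<in>S-{w}. h u)" using fS wS by (simp add: sum.remove)
        have sg: "(\<Sum>u\<in>S. g u) = g w + (\<Sum>u\<in>S-{w}. g u)" using fS wS by (simp add: sum.remove)
        have "(\<Sum>u\<in>S-{w}. h u) = (\<Sum>u\<in>S-{w}. g u)" using IH by (rule sum.cong[OF refl])
        moreover have "(\<Sum>u\<in>S. h u) = (\<Sum>u\<in>S. g u)"
          using Ph Pg True unfolding Pr_def S_def by simp
        ultimately show ?thesis using sh sg by simp
      qed
    qed
  qed
  have e: "(THE f. Pr f) = g" using Pg uniq by (rule the_equality)
  have "mobius A r a y = (THE f. Pr f) y" unfolding mobius_def Pr_def by (rule refl)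
  then show ?thesis using e by simp
qed



section \<open>Abstract rewriting: Newman's lemma\<close>

lemma newman:
  assumes wf: "wf {(y,x). R x y}"
    and lc: "\<And>a b c. R a b \<Longrightarrow> R a c \<Longrightarrow> \<exists>d. R\<^sup>*\<^sup>* b d \<and> R\<^sup>*\<^sup>* c d"
  shows "R\<^sup>*\<^sup>* a b \<Longrightarrow> R\<^sup>*\<^sup>* a c \<Longrightarrow> \<exists>d. R\<^sup>*\<^sup>* b d \<and> R\<^sup>*\<^sup>* c d"
proof (induction a arbitrary: b c rule: wf_induct[OF wf])
  case (1 a)
  show ?case
  proof (cases "a = b")
    case True then show ?thesis using 1 by blast
  next
    case ab: False
    show ?thesis
    proof (cases "a = c")
      case True then show ?thesis using 1 by blast
    next
      case ac: False
      obtain b1 where b1: "R a b1" "R\<^sup>*\<^sup>* b1 b"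
        using 1(2) ab by (metis converse_rtranclpE)
      obtain c1 where c1: "R a c1" "R\<^sup>*\<^sup>* c1 c"
        using 1(3) ac by (metis converse_rtranclpE)
      obtain d1 where d1: "R\<^sup>*\<^sup>* b1 d1" "R\<^sup>*\<^sup>* c1 d1" using lc[OF b1(1) c1(1)] by blast
      obtain e where e: "R\<^sup>*\<^sup>* b e" "R\<^sup>*\<^sup>* d1 e"
        using 1(1)[rule_format, of b1 b d1] b1 d1 by blast
      have "R\<^sup>*\<^sup>* c1 e" using d1(2) e(2) by (rule rtranclp_trans)
      then obtain f where f: "R\<^sup>*\<^sup>* c f" "R\<^sup>*\<^sup>* e f"
        using 1(1)[rule_format, of c1 c e] c1 by blast
      have "R\<^sup>*\<^sup>* b f" using e(1) f(2) by (rule rtranclp_trans)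
      then show ?thesis using f(1) by blast
    qed
  qed
qed

lemma church_rosser:
  assumes wf: "wf {(y,x). R x y}"
    and lc: "\<And>a b c. R a b \<Longrightarrow> R a c \<Longrightarrow> \<exists>d. R\<^sup>*\<^sup>* b d \<and> R\<^sup>*\<^sup>* c d"
  shows "(\<lambda>x y. R x y \<or> R y x)\<^sup>*\<^sup>* a b \<Longrightarrow> \<exists>d. R\<^sup>*\<^sup>* a d \<and> R\<^sup>*\<^sup>* b d"
proof -
  have nw: "\<exists>d. R\<^sup>*\<^sup>* b d \<and> R\<^sup>*\<^sup>* c d" if "R\<^sup>*\<^sup>* a b" "R\<^sup>*\<^sup>* a c" for a b c
    using newman[of R a b c] wf lc that by blast
  show "(\<lambda>x y. R x y \<or> R y x)\<^sup>*\<^sup>* a b \<Longrightarrow> \<exists>d. R\<^sup>*\<^sup>* a d \<and> R\<^sup>*\<^sup>* b d"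
proof (induction rule: rtranclp_induct)
  case base then show ?case by blast
next
  case (step y w)
  then obtain d where d: "R\<^sup>*\<^sup>* a d" "R\<^sup>*\<^sup>* y d" by blast
  show ?case
  proof (cases "R w y")
    case True then show ?thesis using d by (meson converse_rtranclp_into_rtranclp)
  next
    case False
    then have "R y w" using step by blast
    then have "R\<^sup>*\<^sup>* y w" by blast
    then obtain e where "R\<^sup>*\<^sup>* d e" "R\<^sup>*\<^sup>* w e" using nw[OF d(2)] by blast
    then show ?thesis using d(1) by (meson rtranclp_trans)
  qed
qed
qed

lemma normal_rtranclp: "(\<And>y. \<not> R x y) \<Longrightarrow> R\<^sup>*\<^sup>* x y \<Longrightarrow> y = x"
  by (metis converse_rtranclpE)

lemma church_rosser_nf:
  assumes wf: "wf {(y,x). R x y}"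
    and lc: "\<And>a b c. R a b \<Longrightarrow> R a c \<Longrightarrow> \<exists>d. R\<^sup>*\<^sup>* b d \<and> R\<^sup>*\<^sup>* c d"
    and eq: "(\<lambda>x y. R x y \<or> R y x)\<^sup>*\<^sup>* a b"
    and na: "\<And>y. \<not> R a y" and nb: "\<And>y. \<not> R b y"
  shows "a = b"
proof -
  obtain d where "R\<^sup>*\<^sup>* a d" "R\<^sup>*\<^sup>* b d" using church_rosser[of R a b] wf lc eq by blast
  then show ?thesis using normal_rtranclp[of R a] normal_rtranclp[of R b] na nb by metis
qed

section \<open>Inversion counting\<close>

definition ninv :: "('l \<Rightarrow> 'l \<Rightarrow> bool) \<Rightarrow> 'l list \<Rightarrow> nat" where
  "ninv lle w = card {(a,b). a < b \<and> b < length w \<and> lt lle (w ! a) (w ! b)}"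

lemma ninv_swap:
  assumes poL: "porder L lle" and wL: "set w \<subseteq> L" and i: "Suc i < length w"
    and asc: "lt lle (w ! i) (w ! Suc i)"
  shows "ninv lle (w[i := w ! Suc i, Suc i := w ! i]) < ninv lle w"
proof -
  define w' where "w' = w[i := w ! Suc i, Suc i := w ! i]"
  define s where "s = (\<lambda>k::nat. if k = i then Suc i else if k = Suc i then i else k)"
  have w'n: "k < length w \<Longrightarrow> w' ! k = w ! (s k)" for k
    unfolding w'_def s_def using i by (auto simp: nth_list_update)
  have lw: "length w' = length w" unfolding w'_def by simp
  define S where "S = {(a,b). a < b \<and> b < length w \<and> lt lle (w ! a) (w ! b)}"
  define S' where "S' = {(a,b). a < b \<and> b < length w' \<and> lt lle (w' ! a) (w' ! b)}"
  define g where "g = (\<lambda>(a,b). (s a, s b))"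
  have fS: "finite S" unfolding S_def
    by (rule finite_subset[of _ "{..<length w} \<times> {..<length w}"]) auto
  have inS: "(i, Suc i) \<in> S" unfolding S_def using i asc by auto
  have asym: "\<not> lt lle (w ! Suc i) (w ! i)"
  proof
    assume "lt lle (w ! Suc i) (w ! i)"
    moreover have "w ! i \<in> L" "w ! Suc i \<in> L" using wL i by auto
    ultimately show False using asc porderD(2)[OF poL] unfolding lt_def by metis
  qed
  have sub: "g ` S' \<subseteq> S - {(i, Suc i)}"
  proof
    fix p assume "p \<in> g ` S'"
    then obtain a b where ab: "(a,b) \<in> S'" "p = (s a, s b)" unfolding g_def by auto
    have ab2: "a < b" "b < length w" "lt lle (w' ! a) (w' ! b)" using ab(1) lw unfolding S'_def by auto
    have lt2: "lt lle (w ! s a) (w ! s b)" using ab2 w'n by auto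
    have nab: "(a,b) \<noteq> (i, Suc i)" using lt2 asym unfolding s_def by auto
    have "s a < s b" using ab2(1) nab unfolding s_def by auto
    moreover have "s b < length w" using ab2 i unfolding s_def by auto
    moreover have "(s a, s b) \<noteq> (i, Suc i)" using nab ab2(1) unfolding s_def by (auto split: if_splits)
    ultimately show "p \<in> S - {(i, Suc i)}" using ab(2) lt2 unfolding S_def by auto
  qed
  have inj: "inj_on g S'"
  proof (rule inj_onI)
    fix p q assume gpq: "g p = g q"
    have injs: "s x = s y \<Longrightarrow> x = y" for x y unfolding s_def by (simp split: if_splits)
    show "p = q" using gpq by (cases p; cases q) (auto simp: g_def dest: injs)
  qed
  have "card S' = card (g ` S')" using inj by (simp add: card_image)
  also have "\<dots> \<le> card (S - {(i, Suc i)})" using sub fS by (simp add: card_mono)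
  also have "\<dots> < card S" using fS inS by (rule card_Diff1_less)
  finally show ?thesis unfolding ninv_def w'_def[symmetric] S_def S'_def by simp
qed



locale ew =
  fixes P :: "'a set" and le :: "'a \<Rightarrow> 'a \<Rightarrow> bool" and z :: 'a
    and L :: "'l set" and lle :: "'l \<Rightarrow> 'l \<Rightarrow> bool" and lam :: "'a \<Rightarrow> 'a \<Rightarrow> 'l"
  assumes finP: "finite P"
    and gz: "graded_zero P le z"
    and poL: "porder L lle"
    and labL: "\<forall>x y. covers P le x y \<longrightarrow> lam x y \<in> L"
    and gew: "generalized_EW_labeling P le z lle lam"
begin

definition rho :: "'a \<Rightarrow> nat" where
  "rho = (SOME f. f z = 0 \<and> (\<forall>x y. covers P le x y \<longrightarrow> f y = Suc (f x)))"

lemma rho_props: "rho z = 0" "\<And>x y. covers P le x y \<Longrightarrow> rho y = Suc (rho x)"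
proof -
  have "\<exists>f. f z = 0 \<and> (\<forall>x y. covers P le x y \<longrightarrow> f y = Suc (f x))"
    using gz unfolding graded_zero_def by blast
  then have "rho z = 0 \<and> (\<forall>x y. covers P le x y \<longrightarrow> rho y = Suc (rho x))"
    unfolding rho_def by (rule someI_ex)
  then show "rho z = 0" "\<And>x y. covers P le x y \<Longrightarrow> rho y = Suc (rho x)" by auto
qed

lemma po: "porder P le" using gz unfolding graded_zero_def by simp
lemma hz: "has_zero P le z" using gz unfolding graded_zero_def by simp
lemma zP: "z \<in> P" using hz unfolding has_zero_def by simp
lemma zle: "x \<in> P \<Longrightarrow> le z x" using hz unfolding has_zero_def by simp

lemma ER: "ER_labeling P le lle lam" using gew unfolding generalized_EW_labeling_def by simp
lemma R2S: "rank_two_switching P le z lle lam" using gew unfolding generalized_EW_labeling_def by simp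
lemma braid: "braid_relation P le z lle lam" using gew unfolding generalized_EW_labeling_def by simp
lemma canc: "cancellative P le lle lam" using gew unfolding generalized_EW_labeling_def by simp

lemma rho_lt: "x \<in> P \<Longrightarrow> y \<in> P \<Longrightarrow> lt le x y \<Longrightarrow> rho x < rho y"
  using graded_lt[where A=P and r=le and f=rho, OF finP po rho_props(2)] by blast

lemma rho_le: "x \<in> P \<Longrightarrow> y \<in> P \<Longrightarrow> le x y \<Longrightarrow> rho x \<le> rho y"
  using graded_le[where A=P and r=le and f=rho, OF finP po rho_props(2)] by blast

lemma rank_P: "x \<in> P \<Longrightarrow> rank P le z x = rho x"
  using rank_graded[where A=P and r=le and f=rho, OF finP po hz rho_props(2) rho_props(1)] by blast

lemma chain_nth_rho: "sat_chain P le c \<Longrightarrow> i < length c \<Longrightarrow> rho (c ! i) = rho (hd c) + i"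
  using graded_nth[where A=P and r=le and f=rho, OF rho_props(2)] by blast

lemma chain_last_rho: "sat_chain P le c \<Longrightarrow> rho (last c) = rho (hd c) + (length c - 1)"
  using graded_last[where A=P and r=le and f=rho, OF rho_props(2)] by blast

lemma chain_len: "sat_chain P le c \<Longrightarrow> length c = Suc (rho (last c) - rho (hd c))"
  using chain_last_rho[of c] sat_chainD(1)[of P le c] by (cases c) auto

lemma zchain_nth: "sat_chain P le c \<Longrightarrow> hd c = z \<Longrightarrow> i < length c \<Longrightarrow> rho (c ! i) = i"
  using chain_nth_rho rho_props(1) by simp

lemma zchain_len: "sat_chain P le c \<Longrightarrow> hd c = z \<Longrightarrow> length c = Suc (rho (last c))"
  using chain_len rho_props(1) by simp

lemma max_chain_exists: "x \<in> P \<Longrightarrow> y \<in> P \<Longrightarrow> le x y \<Longrightarrow> \<exists>c. max_chain P le x y c"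
  using sat_chain_exists[OF finP po] unfolding max_chain_def by blast

lemma max_chainD: "max_chain P le x y c \<Longrightarrow> sat_chain P le c \<and> hd c = x \<and> last c = y"
  unfolding max_chain_def by simp

lemma max_chain_ends: "max_chain P le x y c \<Longrightarrow> x \<in> P \<and> y \<in> P \<and> le x y"
proof -
  assume m: "max_chain P le x y c"
  then have c: "sat_chain P le c" "hd c = x" "last c = y" "c \<noteq> []" unfolding max_chain_def sat_chain_def by auto
  have "hd c \<in> P" "last c \<in> P" using c sat_chainD(2)[OF c(1)] by auto
  moreover have "le (c ! 0) (c ! (length c - 1))" using sat_chain_le[OF po c(1), of 0 "length c - 1"] c(4) by simp
  ultimately show ?thesis using c by (simp add: hd_conv_nth last_conv_nth)
qed

lemma max_chain_len: "max_chain P le x y c \<Longrightarrow> length c = Suc (rho y - rho x)"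
  using chain_len max_chainD by blast

lemma max_chain_refl: "max_chain P le x x c \<Longrightarrow> c = [x]"
proof -
  assume m: "max_chain P le x x c"
  then have "length c = 1" using max_chain_len by simp
  then show "c = [x]" using m unfolding max_chain_def by (cases c) auto
qed

lemma ltL_trans: "a \<in> L \<Longrightarrow> b \<in> L \<Longrightarrow> c \<in> L \<Longrightarrow> lt lle a b \<Longrightarrow> lt lle b c \<Longrightarrow> lt lle a c"
  using lt_trans[OF poL] by blast

lemma ltL_asym: "a \<in> L \<Longrightarrow> b \<in> L \<Longrightarrow> lt lle a b \<Longrightarrow> \<not> lt lle b a"
  using porderD(2)[OF poL] unfolding lt_def by blast

lemma ltL_irrefl: "\<not> lt lle a a" unfolding lt_def by simp

lemma sorted_consec:
  assumes "set xs \<subseteq> L"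
  shows "sorted_wrt (lt lle) xs \<longleftrightarrow> (\<forall>i. Suc i < length xs \<longrightarrow> lt lle (xs ! i) (xs ! Suc i))"
proof
  assume "sorted_wrt (lt lle) xs" then show "\<forall>i. Suc i < length xs \<longrightarrow> lt lle (xs ! i) (xs ! Suc i)"
    by (simp add: sorted_wrt_iff_nth_less)
next
  assume cons: "\<forall>i. Suc i < length xs \<longrightarrow> lt lle (xs ! i) (xs ! Suc i)"
  have "lt lle (xs ! i) (xs ! k)" if "i < k" "k < length xs" for i k
    using that
  proof (induction k)
    case 0 then show ?case by linarith
  next
    case (Suc k)
    have c: "lt lle (xs ! k) (xs ! Suc k)" using cons Suc.prems by blast
    show ?case
    proof (cases "i = k")
      case True then show ?thesis using c by simp
    next
      case False
      then have "lt lle (xs ! i) (xs ! k)" using Suc by simp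
      moreover have "xs ! i \<in> L" "xs ! k \<in> L" "xs ! Suc k \<in> L" using assms Suc.prems by auto
      ultimately show ?thesis using ltL_trans c by blast
    qed
  qed
  then show "sorted_wrt (lt lle) xs" by (simp add: sorted_wrt_iff_nth_less)
qed

lemma word_length[simp]: "length (word lam c) = length c - 1"
  unfolding word_def by simp

lemma word_nth: "i < length c - 1 \<Longrightarrow> word lam c ! i = lam (c ! i) (c ! Suc i)"
  unfolding word_def by simp

lemma word_nth':
  assumes "0 < i" "i < length c"
  shows "word lam c ! (i - 1) = lam (c ! (i - 1)) (c ! i)"
proof -
  have "Suc (i - 1) = i" using assms by simp
  then show ?thesis using word_nth[of "i - 1" c] assms by simp
qed

lemma word_L: "sat_chain P le c \<Longrightarrow> set (word lam c) \<subseteq> L"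
proof
  fix a assume c: "sat_chain P le c" and "a \<in> set (word lam c)"
  then obtain i where i: "i < length c - 1" "a = lam (c ! i) (c ! Suc i)"
    unfolding word_def by auto
  then have "covers P le (c ! i) (c ! Suc i)" using sat_chainD(3)[OF c] by auto
  then show "a \<in> L" using labL i by auto
qed

lemma increasing_iff:
  assumes c: "sat_chain P le c"
  shows "increasing lle lam c \<longleftrightarrow> (\<forall>i. 0 < i \<and> Suc i < length c \<longrightarrow> ascent lle lam c i)"
proof -
  have "increasing lle lam c \<longleftrightarrow> (\<forall>i. Suc i < length c - 1 \<longrightarrow>
        lt lle (word lam c ! i) (word lam c ! Suc i))"
    unfolding increasing_def using sorted_consec[OF word_L[OF c]] by simp
  also have "\<dots> \<longleftrightarrow> (\<forall>i. 0 < i \<and> Suc i < length c \<longrightarrow> ascent lle lam c i)"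
  proof
    assume h: "\<forall>i. Suc i < length c - 1 \<longrightarrow> lt lle (word lam c ! i) (word lam c ! Suc i)"
    show "\<forall>i. 0 < i \<and> Suc i < length c \<longrightarrow> ascent lle lam c i"
    proof (intro allI impI)
      fix i assume i: "0 < i \<and> Suc i < length c"
      then have "Suc (i - 1) < length c - 1" by linarith
      then have "lt lle (word lam c ! (i - 1)) (word lam c ! Suc (i - 1))" using h by blast
      moreover have "i < length c - 1" using i by linarith
      ultimately show "ascent lle lam c i" using i word_nth'[of i c] word_nth[of i c] unfolding ascent_def by simp
    qed
  next
    assume h: "\<forall>i. 0 < i \<and> Suc i < length c \<longrightarrow> ascent lle lam c i"
    show "\<forall>i. Suc i < length c - 1 \<longrightarrow> lt lle (word lam c ! i) (word lam c ! Suc i)"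
    proof (intro allI impI)
      fix i assume i: "Suc i < length c - 1"
      then have "ascent lle lam c (Suc i)" using h by auto
      then show "lt lle (word lam c ! i) (word lam c ! Suc i)" using i unfolding ascent_def by (simp add: word_nth)
    qed
  qed
  finally show ?thesis .
qed

lemma ascent_word:
  "ascent lle lam c i \<longleftrightarrow> 0 < i \<and> Suc i < length c \<and> lt lle (word lam c ! (i - 1)) (word lam c ! i)"
proof -
  have "Suc i < length c \<Longrightarrow> i < length c - 1" by linarith
  then show ?thesis unfolding ascent_def using word_nth'[of i c] word_nth[of i c] by auto
qed

end


context ew begin

abbreviation UU where "UU \<equiv> U P le lle lam"

lemma switch_ex1:
  "sat_chain P le c \<Longrightarrow> hd c = z \<Longrightarrow> ascent lle lam c i \<Longrightarrow>
   \<exists>!v. swap_ok P le lam (c ! (i - 1)) (c ! i) (c ! Suc i) v"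
  using R2S unfolding rank_two_switching_def by blast

lemma U_eq:
  assumes "sat_chain P le c" "hd c = z" "ascent lle lam c i"
    "swap_ok P le lam (c ! (i - 1)) (c ! i) (c ! Suc i) v"
  shows "UU i c = c[i := v]"
proof -
  have "(THE v. swap_ok P le lam (c ! (i - 1)) (c ! i) (c ! Suc i) v) = v"
    using switch_ex1[OF assms(1-3)] assms(4) by (rule the1_equality)
  then show ?thesis using assms(3) unfolding U_def by simp
qed

lemma U_ex:
  assumes "sat_chain P le c" "hd c = z" "ascent lle lam c i"
  obtains v where "swap_ok P le lam (c ! (i - 1)) (c ! i) (c ! Suc i) v" "UU i c = c[i := v]"
  using switch_ex1[OF assms] U_eq[OF assms] by blast

lemma U_not: "\<not> ascent lle lam c i \<Longrightarrow> UU i c = c"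
  unfolding U_def by simp

lemma swap_chain:
  assumes c: "sat_chain P le c" and a: "ascent lle lam c i"
    and s: "swap_ok P le lam (c ! (i - 1)) (c ! i) (c ! Suc i) v"
  shows "sat_chain P le (c[i := v])" "hd (c[i := v]) = hd c" "last (c[i := v]) = last c"
    "length (c[i := v]) = length c"
    "word lam (c[i := v]) = (word lam c)[i - 1 := word lam c ! i, i := word lam c ! (i - 1)]"
proof -
  have i: "0 < i" "Suc i < length c" using a unfolding ascent_def by auto
  have cv: "covers P le (c ! (i - 1)) v" "covers P le v (c ! Suc i)"
    "lam (c ! (i - 1)) v = lam (c ! i) (c ! Suc i)" "lam v (c ! Suc i) = lam (c ! (i - 1)) (c ! i)"
    using s unfolding swap_ok_def by auto
  have ne: "c \<noteq> []" using c sat_chainD by auto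
  show "length (c[i := v]) = length c" by simp
  show "hd (c[i := v]) = hd c" using i ne by (simp add: hd_conv_nth)
  show "last (c[i := v]) = last c" using i ne by (simp add: last_conv_nth)
  have im1: "Suc (i - 1) = i" using i by simp
  show "sat_chain P le (c[i := v])" unfolding sat_chain_def
  proof (intro conjI allI impI)
    show "c[i := v] \<noteq> []" using ne by simp
    have "v \<in> P" using cv unfolding covers_def by auto
    then show "set (c[i := v]) \<subseteq> P" using sat_chainD(2)[OF c] set_update_subset_insert[of c i v] by blast
  next
    fix m assume m: "Suc m < length (c[i := v])"
    show "covers P le (c[i := v] ! m) (c[i := v] ! Suc m)"
    proof (cases "m = i - 1")
      case True then show ?thesis using cv i im1 by (simp add: nth_list_update)
    next
      case False
      show ?thesis
      proof (cases "m = i")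
        case True then show ?thesis using cv i by (simp add: nth_list_update)
      next
        case False2: False
        then have "Suc m \<noteq> i" using False i by auto
        then show ?thesis using sat_chainD(3)[OF c] m False2 by (simp add: nth_list_update)
      qed
    qed
  qed
  show "word lam (c[i := v]) = (word lam c)[i - 1 := word lam c ! i, i := word lam c ! (i - 1)]"
  proof (rule nth_equalityI)
    show "length (word lam (c[i := v])) = length ((word lam c)[i - 1 := word lam c ! i, i := word lam c ! (i - 1)])"
      by simp
  next
    fix m assume m: "m < length (word lam (c[i := v]))"
    then have m': "m < length c - 1" by simp
    have wi: "word lam c ! i = lam (c ! i) (c ! Suc i)" using word_nth[of i c] i by simp
    have wi1: "word lam c ! (i - 1) = lam (c ! (i - 1)) (c ! i)" using word_nth'[of i c] i by simp
    show "word lam (c[i := v]) ! m = (word lam c)[i - 1 := word lam c ! i, i := word lam c ! (i - 1)] ! m"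
    proof -
      have lhs: "word lam (c[i := v]) ! m = lam (c[i := v] ! m) (c[i := v] ! Suc m)"
        using word_nth[of m "c[i := v]"] m' by simp
      consider "m = i - 1" | "m = i" | "m \<noteq> i - 1 \<and> m \<noteq> i" by blast
      then show ?thesis
      proof cases
        case 1 then show ?thesis using lhs cv i im1 wi m' by (simp add: nth_list_update)
      next
        case 2 then show ?thesis using lhs cv i wi1 m' by (simp add: nth_list_update)
      next
        case 3
        then have "Suc m \<noteq> i" using i by auto
        then show ?thesis using lhs 3 word_nth[of m c] m' by (simp add: nth_list_update)
      qed
    qed
  qed
qed

lemma U_props:
  assumes c: "sat_chain P le c" "hd c = z" and a: "ascent lle lam c i"
  shows "sat_chain P le (UU i c)" "hd (UU i c) = z" "last (UU i c) = last c"
    "length (UU i c) = length c"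
    "word lam (UU i c) = (word lam c)[i - 1 := word lam c ! i, i := word lam c ! (i - 1)]"
    "\<And>m. m \<noteq> i \<Longrightarrow> UU i c ! m = c ! m"
proof -
  obtain v where v: "swap_ok P le lam (c ! (i - 1)) (c ! i) (c ! Suc i) v" "UU i c = c[i := v]"
    using U_ex[OF c a] by blast
  show "sat_chain P le (UU i c)" "hd (UU i c) = z" "last (UU i c) = last c"
    "length (UU i c) = length c"
    "word lam (UU i c) = (word lam c)[i - 1 := word lam c ! i, i := word lam c ! (i - 1)]"
    using swap_chain[OF c(1) a v(1)] v(2) c(2) by auto
  show "\<And>m. m \<noteq> i \<Longrightarrow> UU i c ! m = c ! m" using v(2) by simp
qed

section \<open>Restricted exchange steps\<close>

definition stp :: "nat \<Rightarrow> 'a list \<Rightarrow> 'a list \<Rightarrow> bool" where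
  "stp j c d \<longleftrightarrow> sat_chain P le c \<and> hd c = z \<and> (\<exists>i. j < i \<and> ascent lle lam c i \<and> d = UU i c)"

definition NF :: "nat \<Rightarrow> 'a list \<Rightarrow> bool" where
  "NF j c \<longleftrightarrow> (\<forall>i. j < i \<longrightarrow> \<not> ascent lle lam c i)"

lemma stp_props:
  assumes "stp j c d"
  shows "sat_chain P le d" "hd d = z" "last d = last c" "length d = length c"
    "take (Suc j) d = take (Suc j) c"
proof -
  obtain i where i: "sat_chain P le c" "hd c = z" "j < i" "ascent lle lam c i" "d = UU i c"
    using assms unfolding stp_def by blast
  show "sat_chain P le d" "hd d = z" "last d = last c" "length d = length c"
    using U_props[OF i(1,2,4)] i(5) by auto
  show "take (Suc j) d = take (Suc j) c"
  proof (rule nth_equalityI)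
    show "length (take (Suc j) d) = length (take (Suc j) c)" using U_props[OF i(1,2,4)] i(5) by simp
    fix m assume "m < length (take (Suc j) d)"
    then have "m < Suc j" by simp
    then show "take (Suc j) d ! m = take (Suc j) c ! m" using U_props(6)[OF i(1,2,4), of m] i(3,5) by simp
  qed
qed

definition winv :: "'a list \<Rightarrow> nat" where
  "winv c = ninv lle (word lam c)"

lemma stp_dec: "stp j c d \<Longrightarrow> winv d < winv c"
proof -
  assume "stp j c d"
  then obtain i where i: "sat_chain P le c" "hd c = z" "j < i" "ascent lle lam c i" "d = UU i c"
    unfolding stp_def by blast
  have a: "0 < i" "Suc i < length c" "lt lle (word lam c ! (i - 1)) (word lam c ! i)"
    using i(4) ascent_word by auto
  have "Suc (i - 1) = i" using a by simp
  then have "ninv lle ((word lam c)[i - 1 := word lam c ! Suc (i - 1), Suc (i - 1) := word lam c ! (i - 1)])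
        < ninv lle (word lam c)"
    using ninv_swap[OF poL word_L[OF i(1)], of "i - 1"] a by simp
  then show "winv d < winv c" unfolding winv_def using U_props(5)[OF i(1,2,4)] i(5) \<open>Suc (i - 1) = i\<close> by simp
qed

lemma stp_wf: "wf {(d, c). stp j c d}"
proof (rule wf_subset[OF wf_measure[of winv]])
  show "{(d, c). stp j c d} \<subseteq> measure winv" using stp_dec by auto
qed

lemma NF_exists:
  "sat_chain P le c \<Longrightarrow> hd c = z \<Longrightarrow> \<exists>d. (stp j)\<^sup>*\<^sup>* c d \<and> NF j d"
proof (induction c rule: wf_induct[OF stp_wf[of j]])
  case (1 c)
  show ?case
  proof (cases "NF j c")
    case True then show ?thesis by blast
  next
    case False
    then obtain i where i: "j < i" "ascent lle lam c i" unfolding NF_def by blast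
    have s: "stp j c (UU i c)" unfolding stp_def using 1(2,3) i by blast
    then obtain d where "(stp j)\<^sup>*\<^sup>* (UU i c) d" "NF j d"
      using 1(1) stp_props[OF s] by blast
    then show ?thesis using s by (meson converse_rtranclp_into_rtranclp)
  qed
qed

lemma NF_no_step: "NF j c \<Longrightarrow> \<not> stp j c d"
  unfolding NF_def stp_def by blast

end


context ew begin

lemma lc_commute:
  assumes c: "sat_chain P le c" "hd c = z" and ai: "ascent lle lam c i" and ak: "ascent lle lam c k"
    and ik: "Suc i < k"
  shows "ascent lle lam (UU i c) k" "ascent lle lam (UU k c) i" "UU k (UU i c) = UU i (UU k c)"
proof -
  obtain v where v: "swap_ok P le lam (c ! (i - 1)) (c ! i) (c ! Suc i) v" "UU i c = c[i := v]"
    using U_ex[OF c ai] by blast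
  obtain w where w: "swap_ok P le lam (c ! (k - 1)) (c ! k) (c ! Suc k) w" "UU k c = c[k := w]"
    using U_ex[OF c ak] by blast
  have i0: "0 < i" using ai unfolding ascent_def by simp
  have ne: "k - 1 \<noteq> i" "k \<noteq> i" "Suc k \<noteq> i" "i - 1 \<noteq> k" "Suc i \<noteq> k" using ik i0 by auto
  have c1: "sat_chain P le (c[i := v])" "hd (c[i := v]) = z"
    using swap_chain[OF c(1) ai v(1)] c(2) by auto
  have c2: "sat_chain P le (c[k := w])" "hd (c[k := w]) = z"
    using swap_chain[OF c(1) ak w(1)] c(2) by auto
  have a1: "ascent lle lam (c[i := v]) k" using ak ne unfolding ascent_def by (simp add: nth_list_update)
  have a2: "ascent lle lam (c[k := w]) i" using ai ne unfolding ascent_def by (simp add: nth_list_update)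
  show "ascent lle lam (UU i c) k" "ascent lle lam (UU k c) i" using a1 a2 v w by auto
  have s1: "swap_ok P le lam (c[i := v] ! (k - 1)) (c[i := v] ! k) (c[i := v] ! Suc k) w"
    using w(1) ne by (simp add: nth_list_update)
  have s2: "swap_ok P le lam (c[k := w] ! (i - 1)) (c[k := w] ! i) (c[k := w] ! Suc i) v"
    using v(1) ne by (simp add: nth_list_update)
  have "UU k (UU i c) = c[i := v, k := w]" using U_eq[OF c1 a1 s1] v(2) by simp
  moreover have "UU i (UU k c) = c[k := w, i := v]" using U_eq[OF c2 a2 s2] w(2) by simp
  moreover have "c[i := v, k := w] = c[k := w, i := v]" using ne by (simp add: list_update_swap)
  ultimately show "UU k (UU i c) = UU i (UU k c)" by simp
qed

lemma lc_braid:
  assumes c: "sat_chain P le c" "hd c = z" and ai: "ascent lle lam c i"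
    and ai1: "ascent lle lam c (Suc i)" and ji: "j < i"
  shows "\<exists>e. (stp j)\<^sup>*\<^sup>* (UU i c) e \<and> (stp j)\<^sup>*\<^sup>* (UU (Suc i) c) e"
proof -
  define W where "W = word lam c"
  have i0: "0 < i" and len: "Suc (Suc i) < length c" using ai ai1 unfolding ascent_def by auto
  have WL: "set W \<subseteq> L" using word_L[OF c(1)] W_def by simp
  have lW: "length W = length c - 1" using W_def by simp
  define a where "a = W ! (i - 1)"
  define b where "b = W ! i"
  define d where "d = W ! Suc i"
  have idx: "i - 1 < length W" "i < length W" "Suc i < length W" using lW len by auto
  have L3: "a \<in> L" "b \<in> L" "d \<in> L" unfolding a_def b_def d_def
    using nth_mem[OF idx(1)] nth_mem[OF idx(2)] nth_mem[OF idx(3)] WL by auto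
  have ab: "lt lle a b" using ai ascent_word W_def a_def b_def by auto
  have bd: "lt lle b d" using ai1 ascent_word W_def b_def d_def by auto
  have ad: "lt lle a d" using ltL_trans[OF L3 ab bd] .
  have im: "Suc (i - 1) = i" using i0 by simp
  have neq: "i - 1 \<noteq> i" "i - 1 \<noteq> Suc i" using i0 by auto
  define c1 where "c1 = UU i c"
  have c1p: "sat_chain P le c1" "hd c1 = z" "length c1 = length c"
    "word lam c1 = W[i - 1 := b, i := a]"
    using U_props[OF c ai] unfolding c1_def W_def a_def b_def by auto
  have a11: "ascent lle lam c1 (Suc i)"
    unfolding ascent_word using c1p len lW ad neq d_def by (simp add: nth_list_update)
  define c2 where "c2 = UU (Suc i) c1"
  have c2p: "sat_chain P le c2" "hd c2 = z" "length c2 = length c"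
    "word lam c2 = W[i - 1 := b, i := a, i := d, Suc i := a]"
    using U_props[OF c1p(1,2) a11] c1p len lW neq unfolding c2_def d_def by (auto simp: nth_list_update)
  have a2: "ascent lle lam c2 i"
    unfolding ascent_word using c2p len lW bd neq i0 by (simp add: nth_list_update)
  define c3 where "c3 = UU (Suc i) c"
  have c3p: "sat_chain P le c3" "hd c3 = z" "length c3 = length c"
    "word lam c3 = W[i := d, Suc i := b]"
    using U_props[OF c ai1] unfolding c3_def W_def b_def d_def by auto
  have a3: "ascent lle lam c3 i"
    unfolding ascent_word using c3p len lW ad neq i0 a_def by (simp add: nth_list_update)
  define c4 where "c4 = UU i c3"
  have c4p: "sat_chain P le c4" "hd c4 = z" "length c4 = length c"
    "word lam c4 = W[i := d, Suc i := b, i - 1 := d, i := a]"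
    using U_props[OF c3p(1,2) a3] c3p len lW neq i0 unfolding c4_def a_def by (auto simp: nth_list_update)
  have a4: "ascent lle lam c4 (Suc i)"
    unfolding ascent_word using c4p len lW ab neq i0 by (simp add: nth_list_update)
  have "UU i (UU (i + 1) (UU i c)) = UU (i + 1) (UU i (UU (i + 1) c))"
  proof -
    have "i + 2 < length c" using len by simp
    moreover have "lt lle (lam (c ! (i - 1)) (c ! i)) (lam (c ! i) (c ! (i + 1)))"
      using ai unfolding ascent_def by simp
    moreover have "lt lle (lam (c ! i) (c ! (i + 1))) (lam (c ! (i + 1)) (c ! (i + 2)))"
      using ai1 unfolding ascent_def by (simp add: numeral_2_eq_2)
    ultimately show ?thesis using braid c i0 unfolding braid_relation_def by blast
  qed
  then have br: "UU i c2 = UU (Suc i) c4" unfolding c2_def c4_def c1_def c3_def by simp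
  have "stp j c1 c2" unfolding stp_def c2_def using c1p a11 ji by (auto intro!: exI[of _ "Suc i"])
  moreover have "stp j c2 (UU i c2)" unfolding stp_def using c2p a2 ji by (auto intro!: exI[of _ i])
  moreover have "stp j c3 c4" unfolding stp_def c4_def using c3p a3 ji by (auto intro!: exI[of _ i])
  moreover have "stp j c4 (UU (Suc i) c4)" unfolding stp_def using c4p a4 ji by (auto intro!: exI[of _ "Suc i"])
  ultimately have "(stp j)\<^sup>*\<^sup>* c1 (UU i c2)" "(stp j)\<^sup>*\<^sup>* c3 (UU i c2)" using br by auto
  then show ?thesis unfolding c1_def c3_def by blast
qed

lemma lc_ord:
  assumes c: "sat_chain P le c" "hd c = z" and ai: "ascent lle lam c i" and ak: "ascent lle lam c k"
    and ik: "i < k" and ji: "j < i"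
  shows "\<exists>e. (stp j)\<^sup>*\<^sup>* (UU i c) e \<and> (stp j)\<^sup>*\<^sup>* (UU k c) e"
proof (cases "k = Suc i")
  case True then show ?thesis using lc_braid[OF c ai _ ji] ak by simp
next
  case False
  then have sik: "Suc i < k" using ik by simp
  note cm = lc_commute[OF c ai ak sik]
  have ci: "sat_chain P le (UU i c)" "hd (UU i c) = z" using U_props[OF c ai] by auto
  have ck: "sat_chain P le (UU k c)" "hd (UU k c) = z" using U_props[OF c ak] by auto
  have "stp j (UU i c) (UU k (UU i c))" unfolding stp_def using ci cm(1) ji ik by (auto intro!: exI[of _ k])
  moreover have "stp j (UU k c) (UU i (UU k c))" unfolding stp_def using ck cm(2) ji by (auto intro!: exI[of _ i])
  ultimately show ?thesis using cm(3) by (metis r_into_rtranclp)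
qed

lemma stp_lc:
  assumes "stp j c d1" "stp j c d2"
  shows "\<exists>e. (stp j)\<^sup>*\<^sup>* d1 e \<and> (stp j)\<^sup>*\<^sup>* d2 e"
proof -
  obtain i where i: "sat_chain P le c" "hd c = z" "j < i" "ascent lle lam c i" "d1 = UU i c"
    using assms(1) unfolding stp_def by blast
  obtain k where k: "j < k" "ascent lle lam c k" "d2 = UU k c"
    using assms(2) unfolding stp_def by blast
  consider "i = k" | "i < k" | "k < i" by linarith
  then show ?thesis
  proof cases
    case 1 then show ?thesis using i k by blast
  next
    case 2 then show ?thesis using lc_ord[OF i(1,2,4) k(2) 2 i(3)] i k by simp
  next
    case 3 then show ?thesis using lc_ord[OF i(1,2) k(2) i(4) 3 k(1)] i k by blast
  qed
qed

lemma stp_CR_nf: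
  assumes "(\<lambda>x y. stp j x y \<or> stp j y x)\<^sup>*\<^sup>* a b" "NF j a" "NF j b"
  shows "a = b"
  using church_rosser_nf[of "stp j" a b] stp_wf[of j] stp_lc assms NF_no_step by blast

end


context ew begin

abbreviation S where "S j \<equiv> (\<lambda>x y. stp j x y \<or> stp j y x)"

lemma CP_iff: "c \<in> CP P le z \<longleftrightarrow> sat_chain P le c \<and> hd c = z"
  unfolding CP_def by simp

lemma stp_CP: "stp j c d \<Longrightarrow> c \<in> CP P le z \<and> d \<in> CP P le z"
  using stp_props[of j c d] unfolding stp_def CP_iff by auto

lemma S_props:
  assumes "(S j)\<^sup>*\<^sup>* c d" "c \<in> CP P le z"
  shows "d \<in> CP P le z \<and> last d = last c \<and> length d = length c \<and> take (Suc j) d = take (Suc j) c"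
  using assms
proof (induction rule: rtranclp_induct)
  case base then show ?case by simp
next
  case (step y w)
  then have y: "y \<in> CP P le z" "last y = last c" "length y = length c" "take (Suc j) y = take (Suc j) c" by auto
  show ?case
  proof (cases "stp j y w")
    case True
    then show ?thesis using stp_props[OF True] stp_CP[OF True] y by auto
  next
    case False
    then have s: "stp j w y" using step by blast
    then show ?thesis using stp_props[OF s] stp_CP[OF s] y by auto
  qed
qed

lemma stp_mono: "stp j c d \<Longrightarrow> stp 0 c d"
proof -
  assume "stp j c d"
  then obtain i where i: "sat_chain P le c" "hd c = z" "j < i" "ascent lle lam c i" "d = UU i c"
    unfolding stp_def by blast
  then have "0 < i" by simp
  then show ?thesis unfolding stp_def using i by blast
qed

lemma S_mono: "(S j)\<^sup>*\<^sup>* c d \<Longrightarrow> (S 0)\<^sup>*\<^sup>* c d"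
proof (induction rule: rtranclp_induct)
  case base then show ?case by simp
next
  case (step y w)
  then have "S 0 y w" using stp_mono by blast
  then show ?case by (rule rtranclp.rtrancl_into_rtrancl[OF step(3)])
qed

lemma xstep_stp:
  assumes "sat_chain P le c" "hd c = z" "xstep P le lle lam c d"
  shows "stp 0 c d"
proof -
  obtain i v where i: "ascent lle lam c i" "swap_ok P le lam (c ! (i - 1)) (c ! i) (c ! Suc i) v" "d = c[i := v]"
    using assms(3) unfolding xstep_def by blast
  have "d = UU i c" using U_eq[OF assms(1,2) i(1,2)] i(3) by simp
  moreover have "0 < i" using i(1) unfolding ascent_def by simp
  ultimately show ?thesis unfolding stp_def using assms i by blast
qed

lemma stp_xstep:
  assumes "stp j c d" shows "xstep P le lle lam c d"
proof -
  obtain i where i: "sat_chain P le c" "hd c = z" "j < i" "ascent lle lam c i" "d = UU i c"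
    using assms unfolding stp_def by blast
  obtain v where "swap_ok P le lam (c ! (i - 1)) (c ! i) (c ! Suc i) v" "UU i c = c[i := v]"
    using U_ex[OF i(1,2,4)] by blast
  then show ?thesis unfolding xstep_def using i by blast
qed

lemma eqv_S:
  assumes "lam_equiv P le lle lam z y c d"
  shows "(S 0)\<^sup>*\<^sup>* c d"
proof -
  have "(\<lambda>c1 c2. max_chain P le z y c1 \<and> max_chain P le z y c2 \<and>
        (xstep P le lle lam c1 c2 \<or> xstep P le lle lam c2 c1))\<^sup>*\<^sup>* c d"
    using assms unfolding lam_equiv_def by simp
  then show ?thesis
  proof (induction rule: rtranclp_induct)
    case base then show ?case by simp
  next
    case (step a b)
    then have m: "sat_chain P le a" "hd a = z" "sat_chain P le b" "hd b = z" unfolding max_chain_def by auto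
    have "S 0 a b" using step(2) xstep_stp[OF m(1,2)] xstep_stp[OF m(3,4)] by blast
    then show ?case by (rule rtranclp.rtrancl_into_rtrancl[OF step(3)])
  qed
qed

lemma S_eqv:
  assumes "(S j)\<^sup>*\<^sup>* c d" "max_chain P le z y c"
  shows "lam_equiv P le lle lam z y c d"
proof -
  have c: "c \<in> CP P le z" "last c = y" using assms(2) unfolding max_chain_def CP_iff by auto
  have "max_chain P le z y d \<and> (\<lambda>c1 c2. max_chain P le z y c1 \<and> max_chain P le z y c2 \<and>
        (xstep P le lle lam c1 c2 \<or> xstep P le lle lam c2 c1))\<^sup>*\<^sup>* c d"
    using assms(1)
  proof (induction rule: rtranclp_induct)
    case base then show ?case using assms(2) by simp
  next
    case (step a b)
    have mb: "max_chain P le z y b"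
      using S_props[OF rtranclp.rtrancl_into_rtrancl[OF step(1,2)] c(1)] c(2)
      unfolding max_chain_def CP_iff by auto
    have "xstep P le lle lam a b \<or> xstep P le lle lam b a" using step(2) stp_xstep by blast
    then show ?case using step(3) mb by (auto intro: rtranclp.rtrancl_into_rtrancl)
  qed
  then show ?thesis unfolding lam_equiv_def using assms(2) by simp
qed

lemma Qrel_iff: "(c, d) \<in> Qrel P le z lle lam \<longleftrightarrow> c \<in> CP P le z \<and> (S 0)\<^sup>*\<^sup>* c d"
proof
  assume "(c, d) \<in> Qrel P le z lle lam"
  then show "c \<in> CP P le z \<and> (S 0)\<^sup>*\<^sup>* c d" unfolding Qrel_def using eqv_S by auto
next
  assume a: "c \<in> CP P le z \<and> (S 0)\<^sup>*\<^sup>* c d"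
  then have d: "d \<in> CP P le z" "last d = last c" using S_props by auto
  have "max_chain P le z (last c) c" using a unfolding CP_iff max_chain_def by simp
  then show "(c, d) \<in> Qrel P le z lle lam" unfolding Qrel_def using S_eqv a d by auto
qed

lemma S_sym: "(S j)\<^sup>*\<^sup>* c d \<Longrightarrow> (S j)\<^sup>*\<^sup>* d c"
proof (induction rule: rtranclp_induct)
  case base then show ?case by simp
next
  case (step y w)
  then have "S j w y" by blast
  then show ?case using step(3) by (rule converse_rtranclp_into_rtranclp)
qed

lemma equiv_Qrel: "equiv (CP P le z) (Qrel P le z lle lam)"
proof (rule equivI)
  show "refl_on (CP P le z) (Qrel P le z lle lam)"
    unfolding refl_on_def using Qrel_iff S_props by auto
  show "sym (Qrel P le z lle lam)"
    unfolding sym_def using Qrel_iff S_props S_sym by blast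
  show "trans (Qrel P le z lle lam)"
    unfolding trans_def using Qrel_iff by (meson rtranclp_trans)
  show "Qrel P le z lle lam \<subseteq> CP P le z \<times> CP P le z" unfolding Qrel_def by auto
qed

lemma stp_append:
  assumes s: "stp j b b'" and br: "sat_chain P le (b @ r)"
  shows "stp j (b @ r) (b' @ r)"
proof -
  obtain i where i: "sat_chain P le b" "hd b = z" "j < i" "ascent lle lam b i" "b' = UU i b"
    using s unfolding stp_def by blast
  obtain v where v: "swap_ok P le lam (b ! (i - 1)) (b ! i) (b ! Suc i) v" "UU i b = b[i := v]"
    using U_ex[OF i(1,2,4)] by blast
  have il: "0 < i" "Suc i < length b" using i(4) unfolding ascent_def by auto
  have nb: "b \<noteq> []" using i(1) sat_chainD by auto
  have h: "hd (b @ r) = z" using nb i(2) by simp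
  have il1: "i - 1 < length b" "i < length b" using il by auto
  have a: "ascent lle lam (b @ r) i" using i(4) il il1 unfolding ascent_def by (simp add: nth_append)
  have sw: "swap_ok P le lam ((b @ r) ! (i - 1)) ((b @ r) ! i) ((b @ r) ! Suc i) v"
    using v(1) il il1 by (simp add: nth_append)
  have "UU i (b @ r) = (b @ r)[i := v]" using U_eq[OF br h a sw] .
  also have "\<dots> = b' @ r" using i(5) v(2) il by (simp add: list_update_append)
  finally show ?thesis unfolding stp_def using br h i(3) a by auto
qed

lemma lift_prefix:
  assumes S: "(S j)\<^sup>*\<^sup>* c c'" and c: "c \<in> CP P le z"
    and r: "sat_chain P le r" "hd r = last c"
  shows "(S j)\<^sup>*\<^sup>* (c @ tl r) (c' @ tl r)"
  using S
proof (induction rule: rtranclp_induct)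
  case base then show ?case by simp
next
  case (step y w)
  have y: "y \<in> CP P le z" "last y = last c" using S_props[OF step(1) c] by auto
  have w: "w \<in> CP P le z" "last w = last c"
    using S_props[OF rtranclp.rtrancl_into_rtrancl[OF step(1,2)] c] by auto
  have sy: "sat_chain P le (y @ tl r)" using sat_chain_append[of P le y r] y r unfolding CP_iff by auto
  have sw: "sat_chain P le (w @ tl r)" using sat_chain_append[of P le w r] w r unfolding CP_iff by auto
  have "S j (y @ tl r) (w @ tl r)" using step(2) stp_append sy sw by blast
  then show ?case by (rule rtranclp.rtrancl_into_rtrancl[OF step(3)])
qed

lemma tl_update_Suc: "xs \<noteq> [] \<Longrightarrow> tl (xs[Suc m := x]) = (tl xs)[m := x]"
  by (cases xs) auto

lemma lift_suffix_step:
  assumes p: "sat_chain P le p" "hd p = z" "length p = Suc j"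
    and s1: "max_chain P le (last p) y s1" and s2: "max_chain P le (last p) y s2"
    and x: "xstep P le lle lam s1 s2"
  shows "stp j (p @ tl s1) (p @ tl s2)"
proof -
  obtain i v where i: "ascent lle lam s1 i" "swap_ok P le lam (s1 ! (i - 1)) (s1 ! i) (s1 ! Suc i) v"
      "s2 = s1[i := v]"
    using x unfolding xstep_def by blast
  have il: "0 < i" "Suc i < length s1" using i(1) unfolding ascent_def by auto
  have s1c: "sat_chain P le s1" "hd s1 = last p" using s1 unfolding max_chain_def by auto
  have np: "p \<noteq> []" "s1 \<noteq> []" using p(1) s1c(1) sat_chainD by auto
  define C where "C = p @ tl s1"
  have C: "sat_chain P le C" "hd C = z" unfolding C_def using sat_chain_append[of P le p s1] p(1) s1c np p(2) by auto
  have Cn: "m < length s1 \<Longrightarrow> C ! (j + m) = s1 ! m" for m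
    using join_nth_right[OF np(1,2) s1c(2)[symmetric], of m] p(3) unfolding C_def by simp
  have lC: "length C = j + length s1" using p(3) np unfolding C_def by simp
  have e1: "C ! (j + i - 1) = s1 ! (i - 1)" using Cn[of "i - 1"] il by (simp add: algebra_simps)
  have e2: "C ! (j + i) = s1 ! i" using Cn[of i] il by simp
  have e3: "C ! Suc (j + i) = s1 ! Suc i" using Cn[of "Suc i"] il by simp
  have a: "ascent lle lam C (j + i)" using i(1) il lC e1 e2 e3 unfolding ascent_def by simp
  have sw: "swap_ok P le lam (C ! (j + i - 1)) (C ! (j + i)) (C ! Suc (j + i)) v" using i(2) e1 e2 e3 by simp
  have "UU (j + i) C = C[j + i := v]" using U_eq[OF C a sw] .
  also have "\<dots> = p @ tl s2"
  proof -
    obtain m where m: "i = Suc m" using il by (cases i) auto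
    have "C[j + i := v] = p @ (tl s1)[m := v]" unfolding C_def using p(3) m by (simp add: list_update_append)
    also have "\<dots> = p @ tl s2" using i(3) m tl_update_Suc[OF np(2)] by simp
    finally show ?thesis .
  qed
  finally show ?thesis unfolding stp_def using C a il C_def by (auto intro!: exI[of _ "j + i"])
qed

lemma lift_suffix:
  assumes p: "sat_chain P le p" "hd p = z" "length p = Suc j"
    and eq: "lam_equiv P le lle lam (last p) y s s'"
  shows "(S j)\<^sup>*\<^sup>* (p @ tl s) (p @ tl s')"
proof -
  have "(\<lambda>c1 c2. max_chain P le (last p) y c1 \<and> max_chain P le (last p) y c2 \<and>
        (xstep P le lle lam c1 c2 \<or> xstep P le lle lam c2 c1))\<^sup>*\<^sup>* s s'"
    using eq unfolding lam_equiv_def by simp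
  then show ?thesis
  proof (induction rule: rtranclp_induct)
    case base then show ?case by simp
  next
    case (step a b)
    then have "S j (p @ tl a) (p @ tl b)" using lift_suffix_step[OF p] by blast
    then show ?case by (rule rtranclp.rtrancl_into_rtrancl[OF step(3)])
  qed
qed

lemma prefix_cancel:
  assumes c: "c \<in> CP P le z" and c': "c' \<in> CP P le z" and l: "last c = last c'"
    and eq: "(S 0)\<^sup>*\<^sup>* c c'" and j: "j < length c"
    and tk: "take (Suc j) c = take (Suc j) c'"
  shows "(S j)\<^sup>*\<^sup>* c c'"
proof -
  have len: "length c' = length c" using S_props[OF eq c] by simp
  have cs: "sat_chain P le c" "hd c = z" "sat_chain P le c'" "hd c' = z" using c c' unfolding CP_iff by auto
  consider "j = 0" | "j = length c - 1" | "0 < j \<and> j < length c - 1" using j by linarith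
  then show ?thesis
  proof cases
    case 1 then show ?thesis using eq by simp
  next
    case 2
    then have sj: "Suc j = length c" using j by linarith
    have e1: "take (Suc j) c = c" using sj by simp
    have e2: "take (Suc j) c' = c'" using sj len by simp
    have "c = c'" using e1 e2 tk by metis
    then show ?thesis by (simp only: rtranclp.rtrancl_refl)
  next
    case 3
    define p where "p = take (Suc j) c"
    define s where "s = drop j c"
    define s' where "s' = drop j c'"
    define t where "t = c ! j"
    define y where "y = last c"
    have jl': "j < length c'" using j len by simp
    have cj: "c = p @ tl s" unfolding p_def s_def using take_drop_join[OF j] by simp
    have cj': "c' = p @ tl s'" unfolding p_def s'_def using take_drop_join[OF jl'] tk by simp
    have pc: "sat_chain P le p" "hd p = z" "last p = t" "length p = Suc j"
      unfolding p_def t_def using sat_chain_take[OF cs(1) j] cs(2) last_take_Suc[OF j] j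
      by (auto simp: hd_conv_nth)
    have tc': "c' ! j = t" using tk last_take_Suc[OF j] last_take_Suc[OF jl'] unfolding t_def by simp
    have sc: "sat_chain P le s" "hd s = t" "last s = y"
      unfolding s_def t_def y_def using sat_chain_drop[OF cs(1) j] hd_drop_nth[OF j] j by auto
    have sc': "sat_chain P le s'" "hd s' = t" "last s' = y"
      unfolding s'_def y_def using sat_chain_drop[OF cs(3) jl'] hd_drop_nth[OF jl'] tc' jl' l by auto
    have tP: "t \<in> P" using sat_chain_nth_in[OF cs(1) j] t_def by simp
    have cne: "c \<noteq> []" using sat_chainD(1)[OF cs(1)] .
    have yP: "y \<in> P" using sat_chainD(2)[OF cs(1)] last_in_set[OF cne] unfolding y_def by blast
    have rt: "rho t = j" using zchain_nth[OF cs(1,2) j] t_def by simp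
    have ry: "rho y = length c - 1" using zchain_len[OF cs(1,2)] y_def by simp
    have zt: "lt le z t"
    proof -
      have "le z t" using zle[OF tP] .
      moreover have "z \<noteq> t" using rt 3 rho_props(1) by auto
      ultimately show ?thesis unfolding lt_def by simp
    qed
    have ty: "lt le t y"
    proof -
      have "le t y" using sat_chain_le[OF po cs(1), of j "length c - 1"] j cne
        unfolding t_def y_def by (simp add: last_conv_nth)
      moreover have "t \<noteq> y" using rt ry 3 by auto
      ultimately show ?thesis unfolding lt_def by simp
    qed
    have mp: "max_chain P le z t p" using pc unfolding max_chain_def by simp
    have ms: "max_chain P le t y s" "max_chain P le t y s'" using sc sc' unfolding max_chain_def by auto
    have "max_chain P le z y c" using cs y_def unfolding max_chain_def by simp
    then have "lam_equiv P le lle lam z y (p @ tl s) (p @ tl s')" using S_eqv[OF eq] cj cj' by simp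
    then have "lam_equiv P le lle lam t y s s'"
      using canc zP tP yP zt ty mp ms unfolding cancellative_def by blast
    then have "(S j)\<^sup>*\<^sup>* (p @ tl s) (p @ tl s')" using lift_suffix[OF pc(1,2,4)] pc(3) by simp
    then show ?thesis using cj cj' by simp
  qed
qed

end


context ew begin

abbreviation "Qc \<equiv> Qcarrier P le z lle lam"
abbreviation "Qr \<equiv> Qrel P le z lle lam"
abbreviation "QL \<equiv> Qle P le z lle lam"
abbreviation "CPz \<equiv> CP P le z"

definition cls :: "'a list \<Rightarrow> 'a list set" where "cls c = Qr `` {c}"

lemma cls_mem: "d \<in> cls c \<longleftrightarrow> c \<in> CPz \<and> (S 0)\<^sup>*\<^sup>* c d"
  unfolding cls_def using Qrel_iff by auto

lemma cls_self: "c \<in> CPz \<Longrightarrow> c \<in> cls c"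
  using cls_mem by simp

lemma cls_in_Qc: "c \<in> CPz \<Longrightarrow> cls c \<in> Qc"
  unfolding cls_def Qcarrier_def by (rule quotientI)

lemma Qc_cls: "X \<in> Qc \<Longrightarrow> \<exists>c\<in>CPz. X = cls c"
  unfolding cls_def Qcarrier_def by (auto elim: quotientE)

lemma cls_eq: "c \<in> CPz \<Longrightarrow> d \<in> CPz \<Longrightarrow> cls c = cls d \<longleftrightarrow> (S 0)\<^sup>*\<^sup>* c d"
  unfolding cls_def using eq_equiv_class_iff[OF equiv_Qrel] Qrel_iff by blast

lemma Qc_mem:
  assumes "X \<in> Qc" "d \<in> X"
  shows "d \<in> CPz" "X = cls d"
proof -
  obtain c where c: "c \<in> CPz" "X = cls c" using Qc_cls[OF assms(1)] by blast
  then have cd: "(S 0)\<^sup>*\<^sup>* c d" using assms(2) cls_mem by auto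
  then show "d \<in> CPz" using S_props c by blast
  then show "X = cls d" using cls_eq[OF c(1)] cd c by simp
qed

lemma Qc_ne: "X \<in> Qc \<Longrightarrow> X \<noteq> {}"
  using Qc_cls cls_self by blast

lemma Qc_same:
  assumes "X \<in> Qc" "c \<in> X" "d \<in> X"
  shows "(S 0)\<^sup>*\<^sup>* c d" "last d = last c" "length d = length c"
proof -
  show "(S 0)\<^sup>*\<^sup>* c d" using Qc_mem[OF assms(1,2)] assms(3) cls_mem by auto
  then show "last d = last c" "length d = length c" using S_props Qc_mem[OF assms(1,2)] by auto
qed

definition topQ :: "'a list set \<Rightarrow> 'a" where "topQ X = last (SOME c. c \<in> X)"
definition rkQ :: "'a list set \<Rightarrow> nat" where "rkQ X = rho (topQ X)"

lemma topQ:
  assumes "X \<in> Qc" "c \<in> X"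
  shows "last c = topQ X" "length c = Suc (rkQ X)"
proof -
  have s: "(SOME c. c \<in> X) \<in> X" using assms(2) by (rule someI)
  show lc: "last c = topQ X" unfolding topQ_def using Qc_same(2)[OF assms(1) s assms(2)] by simp
  have "c \<in> CPz" using Qc_mem[OF assms] by simp
  then show "length c = Suc (rkQ X)" using zchain_len lc unfolding rkQ_def CP_iff by auto
qed

lemma prefix_of_subset:
  assumes c: "c \<in> CPz" and d: "d \<in> CPz" and sub: "set c \<subseteq> set d"
  shows "take (length c) d = c" "length c \<le> length d"
proof -
  have cs: "sat_chain P le c" "hd c = z" and ds: "sat_chain P le d" "hd d = z" using c d CP_iff by auto
  have k: "i < length d \<and> d ! i = c ! i" if i: "i < length c" for i
  proof -
    have "c ! i \<in> set d" using sub i by auto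
    then obtain k where k: "k < length d" "d ! k = c ! i" by (auto simp: in_set_conv_nth)
    have "rho (d ! k) = k" using zchain_nth[OF ds k(1)] .
    moreover have "rho (c ! i) = i" using zchain_nth[OF cs i] .
    ultimately have "k = i" using k by simp
    then show ?thesis using k by simp
  qed
  have ne: "c \<noteq> []" using cs sat_chainD by auto
  then show ll: "length c \<le> length d" using k[of "length c - 1"] by (cases c) auto
  show "take (length c) d = c"
    by (rule nth_equalityI) (use ll k in auto)
qed

lemma take_len_le: "take n d = c \<Longrightarrow> length c \<le> length d"
  by auto

definition QR :: "'a list set \<Rightarrow> 'a list set \<Rightarrow> bool" where
  "QR X Y \<longleftrightarrow> X \<in> Qc \<and> Y \<in> Qc \<and> (\<exists>c\<in>X. \<exists>d\<in>Y. take (length c) d = c)"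

lemma QR_alt: "QR X Y \<longleftrightarrow> X \<in> Qc \<and> Y \<in> Qc \<and> (\<exists>c\<in>X. \<exists>d\<in>Y. set c \<subseteq> set d)"
proof
  assume "QR X Y" then show "X \<in> Qc \<and> Y \<in> Qc \<and> (\<exists>c\<in>X. \<exists>d\<in>Y. set c \<subseteq> set d)"
    unfolding QR_def by (metis set_take_subset)
next
  assume a: "X \<in> Qc \<and> Y \<in> Qc \<and> (\<exists>c\<in>X. \<exists>d\<in>Y. set c \<subseteq> set d)"
  then obtain c d where cd: "c \<in> X" "d \<in> Y" "set c \<subseteq> set d" by blast
  have "c \<in> CPz" "d \<in> CPz" using Qc_mem a cd by auto
  then show "QR X Y" unfolding QR_def using a cd prefix_of_subset by blast
qed

lemma QR_trans:
  assumes "QR X Y" "QR Y W" shows "QR X W"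
proof -
  obtain c d where cd: "c \<in> X" "d \<in> Y" "take (length c) d = c" using assms(1) unfolding QR_def by blast
  obtain d' e where de: "d' \<in> Y" "e \<in> W" "take (length d') e = d'" using assms(2) unfolding QR_def by blast
  have Q: "X \<in> Qc" "Y \<in> Qc" "W \<in> Qc" using assms unfolding QR_def by auto
  have d'd: "(S 0)\<^sup>*\<^sup>* d' d" using Qc_same[OF Q(2) de(1) cd(2)] by simp
  have d': "d' \<in> CPz" using Qc_mem[OF Q(2) de(1)] by simp
  have e: "e \<in> CPz" using Qc_mem[OF Q(3) de(2)] by simp
  have es: "sat_chain P le e" "hd e = z" using e CP_iff by auto
  have ld: "length d' \<le> length e" using de(3) by (rule take_len_le)
  have d'ne: "d' \<noteq> []" using d' CP_iff sat_chainD by auto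
  then have jl: "length d' - 1 < length e" using ld by (cases d') auto
  define r where "r = drop (length d' - 1) e"
  have rs: "sat_chain P le r" unfolding r_def using sat_chain_drop[OF es(1) jl] .
  have "take (Suc (length d' - 1)) e = d'" using de(3) d'ne by (cases d') auto
  then have hr: "hd r = last d'" unfolding r_def using hd_drop_nth[OF jl] last_take_Suc[OF jl] by simp
  have ee: "d' @ tl r = e" unfolding r_def using take_drop_join[OF jl] \<open>take (Suc (length d' - 1)) e = d'\<close> by simp
  have "(S 0)\<^sup>*\<^sup>* (d' @ tl r) (d @ tl r)" using lift_prefix[OF d'd d' rs hr] .
  then have "(S 0)\<^sup>*\<^sup>* e (d @ tl r)" using ee by simp
  then have inW: "d @ tl r \<in> W" using Qc_mem(2)[OF Q(3) de(2)] cls_mem e by auto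
  have lc: "length c \<le> length d" using cd(3) by (rule take_len_le)
  have "take (length c) (d @ tl r) = c" using cd(3) lc by simp
  then show ?thesis unfolding QR_def using Q cd(1) inW by blast
qed

lemma QL_QR: "QL X Y \<longleftrightarrow> QR X Y"
proof
  assume "QL X Y"
  then have "(\<lambda>X Y. QR X Y)\<^sup>+\<^sup>+ X Y" unfolding Qle_def QR_alt[abs_def] by simp
  then show "QR X Y"
    by (induction rule: tranclp_induct) (auto intro: QR_trans)
next
  assume "QR X Y"
  then show "QL X Y" unfolding Qle_def QR_alt by auto
qed

lemma QL_iff: "QL X Y \<longleftrightarrow> X \<in> Qc \<and> Y \<in> Qc \<and> (\<exists>c\<in>X. \<exists>d\<in>Y. take (length c) d = c)"
  using QL_QR QR_def by simp

lemma QL_rk: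
  assumes "QL X Y" shows "rkQ X \<le> rkQ Y" "rkQ X = rkQ Y \<Longrightarrow> X = Y"
proof -
  obtain c d where cd: "X \<in> Qc" "Y \<in> Qc" "c \<in> X" "d \<in> Y" "take (length c) d = c"
    using assms QL_iff by blast
  have lc: "length c \<le> length d" using cd(5) by (rule take_len_le)
  then show "rkQ X \<le> rkQ Y" using topQ[OF cd(1,3)] topQ[OF cd(2,4)] by simp
  assume "rkQ X = rkQ Y"
  then have "length c = length d" using topQ[OF cd(1,3)] topQ[OF cd(2,4)] by simp
  then have "c = d" using cd(5) by simp
  then show "X = Y" using Qc_mem(2)[OF cd(1,3)] Qc_mem(2)[OF cd(2,4)] by simp
qed

lemma zQ: "cls [z] = {[z]}"
proof -
  have zc: "[z] \<in> CPz" unfolding CP_iff using sat_chain_single[OF zP] by simp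
  have "d = [z]" if "d \<in> cls [z]" for d
  proof -
    have "d \<in> CPz" "last d = z" "length d = 1" using S_props[of 0 "[z]" d] zc that cls_mem by auto
    then show ?thesis by (cases d) auto
  qed
  then show ?thesis using cls_self[OF zc] by blast
qed

lemma zQc: "{[z]} \<in> Qc" using cls_in_Qc[of "[z]"] zQ zP sat_chain_single unfolding CP_iff by fastforce

lemma rkQ_z: "rkQ {[z]} = 0"
  using topQ(2)[OF zQc, of "[z]"] by simp

lemma QL_z: "X \<in> Qc \<Longrightarrow> QL {[z]} X"
proof -
  assume X: "X \<in> Qc"
  obtain c where c: "c \<in> X" using Qc_ne[OF X] by blast
  have "c \<in> CPz" using Qc_mem[OF X c] by simp
  then have "take 1 c = [z]" unfolding CP_iff by (cases c) (auto dest: sat_chainD)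
  then show ?thesis using QL_iff X zQc c by force
qed

lemma finite_CP: "finite CPz"
proof -
  have "CPz \<subseteq> {xs. set xs \<subseteq> P \<and> length xs \<le> card P}"
  proof
    fix c assume "c \<in> CPz"
    then have cs: "sat_chain P le c" "hd c = z" using CP_iff by auto
    have "distinct c"
    proof (rule distinct_conv_nth[THEN iffD2], intro allI impI)
      fix i k assume "i < length c" "k < length c" "i \<noteq> k"
      then show "c ! i \<noteq> c ! k" using zchain_nth[OF cs, of i] zchain_nth[OF cs, of k] by metis
    qed
    then have "length c = card (set c)" by (simp add: distinct_card)
    also have "\<dots> \<le> card P" using card_mono[OF finP] sat_chainD(2)[OF cs(1)] by blast
    finally show "c \<in> {xs. set xs \<subseteq> P \<and> length xs \<le> card P}" using sat_chainD(2)[OF cs(1)] by simp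
  qed
  then show ?thesis using finite_subset finite_lists_length_le[OF finP] by blast
qed

lemma finite_Qc: "finite Qc"
proof -
  have "Qc \<subseteq> cls ` CPz" using Qc_cls by blast
  then show ?thesis using finite_CP finite_subset by blast
qed

lemma porder_Q: "porder Qc QL"
  unfolding porder_def
proof (intro conjI ballI impI)
  fix X assume X: "X \<in> Qc"
  obtain c where "c \<in> X" using Qc_ne[OF X] by blast
  moreover have "take (length c) c = c" by simp
  ultimately have "\<exists>c\<in>X. \<exists>d\<in>X. take (length c) d = c" by blast
  then show "QL X X" using QL_iff X by blast
next
  fix X Y assume "X \<in> Qc" "Y \<in> Qc" "QL X Y \<and> QL Y X"
  then show "X = Y" using QL_rk by (meson le_antisym)
next
  fix X Y W assume "X \<in> Qc" "Y \<in> Qc" "W \<in> Qc" "QL X Y \<and> QL Y W"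
  then show "QL X W" using QL_QR QR_trans by blast
qed

lemma covers_Q:
  assumes cv: "covers Qc QL X Y" shows "rkQ Y = Suc (rkQ X)"
proof -
  have XY: "X \<in> Qc" "Y \<in> Qc" "QL X Y" "X \<noteq> Y" using cv unfolding covers_def lt_def by auto
  have lt: "rkQ X < rkQ Y" using QL_rk[OF XY(3)] XY(4) by fastforce
  obtain c d where cd: "c \<in> X" "d \<in> Y" "take (length c) d = c" using XY QL_iff by blast
  have lcd: "length c = Suc (rkQ X)" "length d = Suc (rkQ Y)" using topQ XY cd by auto
  show ?thesis
  proof (rule ccontr)
    assume "rkQ Y \<noteq> Suc (rkQ X)"
    then have big: "Suc (length c) < length d" using lt lcd by linarith
    define w where "w = take (Suc (length c)) d"
    have dC: "d \<in> CPz" using Qc_mem[OF XY(2) cd(2)] by simp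
    have wC: "w \<in> CPz" unfolding w_def CP_iff
      using sat_chain_take[of P le d "length c"] dC big unfolding CP_iff by (cases d) auto
    define W where "W = cls w"
    have WQ: "W \<in> Qc" using cls_in_Qc[OF wC] W_def by simp
    have wW: "w \<in> W" using cls_self[OF wC] W_def by simp
    have "take (length c) w = c" unfolding w_def using cd(3) by (simp add: min_def)
    then have XW: "QL X W" using QL_iff XY WQ cd wW by blast
    have "take (length w) d = w" unfolding w_def using big by (simp add: min_def)
    then have WY: "QL W Y" using QL_iff XY WQ cd wW by blast
    have lw: "length w = Suc (length c)" unfolding w_def using big by simp
    have "rkQ W = Suc (rkQ X)" using topQ(2)[OF WQ wW] lw lcd by simp
    then have "X \<noteq> W" "W \<noteq> Y" using big lcd by auto
    then show False using cv WQ XW WY unfolding covers_def lt_def by blast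
  qed
qed

lemma graded_Q: "graded_zero Qc QL {[z]}"
  unfolding graded_zero_def has_zero_def
  using porder_Q zQc QL_z rkQ_z covers_Q by blast

lemma rank_Q: "X \<in> Qc \<Longrightarrow> rank Qc QL {[z]} X = rkQ X"
  using rank_graded[where A=Qc and r=QL and f=rkQ, OF finite_Qc porder_Q _ covers_Q rkQ_z]
    zQc QL_z unfolding has_zero_def by blast

end


section \<open>Alternating sum lemma\<close>

lemma alt_sum_zero:
  fixes A :: "nat \<Rightarrow> bool"
  assumes n: "0 < n"
  shows "(\<Sum>j\<in>{j. j \<le> n \<and> (\<forall>i. 0 < i \<and> i < j \<longrightarrow> \<not> A i) \<and> (\<forall>i. j < i \<and> i < n \<longrightarrow> A i)}.
           (-1::int) ^ j) = 0"
proof -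
  define J where "J = {j. j \<le> n \<and> (\<forall>i. 0 < i \<and> i < j \<longrightarrow> \<not> A i) \<and> (\<forall>i. j < i \<and> i < n \<longrightarrow> A i)}"
  define p where "p = (LEAST i. 0 < i \<and> (i < n \<longrightarrow> A i))"
  have ex: "0 < n \<and> (n < n \<longrightarrow> A n)" using n by simp
  have p1: "0 < p \<and> (p < n \<longrightarrow> A p)" unfolding p_def
    using LeastI[of "\<lambda>i. 0 < i \<and> (i < n \<longrightarrow> A i)" n] ex by blast
  have p2: "p \<le> n" unfolding p_def using Least_le[of "\<lambda>i. 0 < i \<and> (i < n \<longrightarrow> A i)" n] ex by blast
  have p3: "\<not> A i" if "0 < i" "i < p" for i
  proof
    assume "A i"
    then have "0 < i \<and> (i < n \<longrightarrow> A i)" using that by simp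
    then have "p \<le> i" unfolding p_def using Least_le[of "\<lambda>i. 0 < i \<and> (i < n \<longrightarrow> A i)" i] by blast
    then show False using that by simp
  qed
  have sub: "J \<subseteq> {p - 1, p}"
  proof
    fix j assume j: "j \<in> J"
    have "j \<le> p"
    proof (rule ccontr)
      assume "\<not> j \<le> p"
      then have "p < j" by simp
      then have "p < n" "\<not> A p" using j p1 unfolding J_def by auto
      then show False using p1 by simp
    qed
    moreover have "p - 1 \<le> j"
    proof (rule ccontr)
      assume "\<not> p - 1 \<le> j"
      then have "j < p - 1" "0 < p - 1" "p - 1 < n" using p2 by auto
      then have "A (p - 1)" using j unfolding J_def by auto
      moreover have "\<not> A (p - 1)" using p3 \<open>0 < p - 1\<close> p1 by simp
      ultimately show False by simp
    qed
    ultimately show "j \<in> {p - 1, p}" by auto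
  qed
  have iff: "p - 1 \<in> J \<longleftrightarrow> p \<in> J"
  proof -
    have a1: "(\<forall>i. 0 < i \<and> i < p - 1 \<longrightarrow> \<not> A i)" "(\<forall>i. 0 < i \<and> i < p \<longrightarrow> \<not> A i)" using p3 by auto
    have "(\<forall>i. p - 1 < i \<and> i < n \<longrightarrow> A i) \<longleftrightarrow> (\<forall>i. p < i \<and> i < n \<longrightarrow> A i)"
    proof
      assume "\<forall>i. p - 1 < i \<and> i < n \<longrightarrow> A i" then show "\<forall>i. p < i \<and> i < n \<longrightarrow> A i" by auto
    next
      assume h: "\<forall>i. p < i \<and> i < n \<longrightarrow> A i"
      show "\<forall>i. p - 1 < i \<and> i < n \<longrightarrow> A i"
      proof (intro allI impI)
        fix i assume i: "p - 1 < i \<and> i < n"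
        then consider "i = p" | "p < i" by linarith
        then show "A i" using h i p1 by cases auto
      qed
    qed
    then show ?thesis unfolding J_def using a1 p2 by auto
  qed
  have pp: "p - 1 \<noteq> p" using p1 by linarith
  show ?thesis
  proof (cases "p \<in> J")
    case True
    then have "J = {p - 1, p}" using sub iff by auto
    moreover have "(-1::int) ^ (p - 1) + (-1) ^ p = 0"
    proof -
      obtain q where "p = Suc q" using p1 by (cases p) auto
      then show ?thesis by simp
    qed
    ultimately show ?thesis using pp unfolding J_def[symmetric] by simp
  next
    case False
    then have "J = {}" using sub iff by auto
    then show ?thesis unfolding J_def[symmetric] by simp
  qed
qed

context ew begin

definition noasc :: "'a list \<Rightarrow> bool" where
  "noasc c \<longleftrightarrow> (\<forall>i. \<not> ascent lle lam c i)"

definition inc :: "'a \<Rightarrow> 'a \<Rightarrow> 'a list" where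
  "inc x y = (THE c. max_chain P le x y c \<and> increasing lle lam c)"

lemma inc_props:
  assumes "x \<in> P" "y \<in> P" "le x y"
  shows "max_chain P le x y (inc x y)" "increasing lle lam (inc x y)"
proof -
  have "\<exists>!c. max_chain P le x y c \<and> increasing lle lam c" using ER assms unfolding ER_labeling_def by blast
  then have "max_chain P le x y (inc x y) \<and> increasing lle lam (inc x y)"
    unfolding inc_def by (rule theI')
  then show "max_chain P le x y (inc x y)" "increasing lle lam (inc x y)" by auto
qed

lemma inc_unique:
  assumes "max_chain P le x y c" "increasing lle lam c"
  shows "c = inc x y"
proof -
  have xy: "x \<in> P" "y \<in> P" "le x y" using max_chain_ends[OF assms(1)] by auto
  have "\<exists>!c. max_chain P le x y c \<and> increasing lle lam c" using ER xy unfolding ER_labeling_def by blast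
  then show ?thesis using assms inc_props[OF xy] by blast
qed

lemma ascent_take:
  assumes "i < j" shows "ascent lle lam (take (Suc j) m) i \<longleftrightarrow> ascent lle lam m i"
proof -
  have "Suc i < length (take (Suc j) m) \<longleftrightarrow> Suc i < length m" using assms by auto
  then show ?thesis unfolding ascent_def using assms by (auto simp: nth_take)
qed

lemma noasc_take:
  assumes "j < length m"
  shows "noasc (take (Suc j) m) \<longleftrightarrow> (\<forall>i. 0 < i \<and> i < j \<longrightarrow> \<not> ascent lle lam m i)"
proof -
  have lt: "ascent lle lam (take (Suc j) m) i \<Longrightarrow> i < j" for i unfolding ascent_def by auto
  show ?thesis
  proof
    assume h: "noasc (take (Suc j) m)"
    show "\<forall>i. 0 < i \<and> i < j \<longrightarrow> \<not> ascent lle lam m i"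
    proof (intro allI impI)
      fix i assume i: "0 < i \<and> i < j"
      have "\<not> ascent lle lam (take (Suc j) m) i" using h unfolding noasc_def by blast
      moreover have "i < j" using i by blast
      ultimately show "\<not> ascent lle lam m i" using ascent_take[of i j m] by blast
    qed
  next
    assume h: "\<forall>i. 0 < i \<and> i < j \<longrightarrow> \<not> ascent lle lam m i"
    show "noasc (take (Suc j) m)" unfolding noasc_def
    proof (intro allI notI)
      fix i assume a: "ascent lle lam (take (Suc j) m) i"
      then have "i < j" using lt by blast
      moreover have "0 < i" using a unfolding ascent_def by blast
      ultimately show False using a h ascent_take[of i j m] by blast
    qed
  qed
qed

lemma ascent_drop:
  "ascent lle lam (drop j m) i \<longleftrightarrow> 0 < i \<and> ascent lle lam m (j + i)"
proof -
  have "0 < i \<Longrightarrow> drop j m ! (i - 1) = m ! (j + i - 1)" if "j + i - 1 < length m"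
    using that by (simp add: algebra_simps)
  then show ?thesis unfolding ascent_def by (auto simp: algebra_simps)
qed

lemma increasing_drop:
  assumes m: "sat_chain P le m" and j: "j < length m"
  shows "increasing lle lam (drop j m) \<longleftrightarrow> (\<forall>i. j < i \<and> i < length m - 1 \<longrightarrow> ascent lle lam m i)"
proof -
  have s: "sat_chain P le (drop j m)" using sat_chain_drop[OF m j] .
  have "increasing lle lam (drop j m) \<longleftrightarrow> (\<forall>i. 0 < i \<and> Suc i < length (drop j m) \<longrightarrow> ascent lle lam (drop j m) i)"
    using increasing_iff[OF s] .
  also have "\<dots> \<longleftrightarrow> (\<forall>i. j < i \<and> i < length m - 1 \<longrightarrow> ascent lle lam m i)"
  proof
    assume h: "\<forall>i. 0 < i \<and> Suc i < length (drop j m) \<longrightarrow> ascent lle lam (drop j m) i"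
    show "\<forall>i. j < i \<and> i < length m - 1 \<longrightarrow> ascent lle lam m i"
    proof (intro allI impI)
      fix i assume i: "j < i \<and> i < length m - 1"
      then have "0 < i - j \<and> Suc (i - j) < length (drop j m)" by auto
      then have "ascent lle lam (drop j m) (i - j)" using h by blast
      then show "ascent lle lam m i" using ascent_drop i by simp
    qed
  next
    assume h: "\<forall>i. j < i \<and> i < length m - 1 \<longrightarrow> ascent lle lam m i"
    show "\<forall>i. 0 < i \<and> Suc i < length (drop j m) \<longrightarrow> ascent lle lam (drop j m) i"
    proof (intro allI impI)
      fix i assume i: "0 < i \<and> Suc i < length (drop j m)"
      then have "ascent lle lam m (j + i)" using h by auto
      then show "ascent lle lam (drop j m) i" using ascent_drop i by simp
    qed
  qed
  finally show ?thesis .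
qed

end


lemma last_join: "p \<noteq> [] \<Longrightarrow> s \<noteq> [] \<Longrightarrow> last p = hd s \<Longrightarrow> last (p @ tl s) = last s"
  by (cases s) auto

lemma drop_join: "p \<noteq> [] \<Longrightarrow> s \<noteq> [] \<Longrightarrow> last p = hd s \<Longrightarrow> drop (length p - 1) (p @ tl s) = s"
proof -
  assume a: "p \<noteq> []" "s \<noteq> []" "last p = hd s"
  have e: "butlast p @ [last p] = p" using a(1) by simp
  have "drop (length (butlast p)) (butlast p @ [last p]) = [last p]" by simp
  then have "drop (length p - 1) p = [last p]" using e by (metis length_butlast)
  then show ?thesis using a by (cases s) auto
qed

context ew begin

definition AF :: "'a \<Rightarrow> 'a list set" where
  "AF x = {c. max_chain P le z x c \<and> noasc c}"

lemma finite_AF: "finite (AF x)"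
  by (rule finite_subset[OF _ finite_CP]) (auto simp: AF_def max_chain_def CP_def)

lemma AF_z: "AF z = {[z]}"
proof -
  have z1: "noasc [z]" unfolding noasc_def ascent_def by simp
  have z2: "max_chain P le z z [z]" unfolding max_chain_def using sat_chain_single[OF zP] by simp
  show ?thesis
  proof (rule set_eqI)
    fix c show "c \<in> AF z \<longleftrightarrow> c \<in> {[z]}"
    proof
      assume "c \<in> AF z"
      then have "max_chain P le z z c" unfolding AF_def by simp
      then show "c \<in> {[z]}" using max_chain_refl by simp
    next
      assume "c \<in> {[z]}"
      then have "c = [z]" by simp
      then show "c \<in> AF z" unfolding AF_def using z1 z2 by simp
    qed
  qed
qed

lemma rho_pos: "w \<in> P \<Longrightarrow> w \<noteq> z \<Longrightarrow> 0 < rho w"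
  using rho_lt[OF zP _ , of w] zle rho_props(1) unfolding lt_def by auto

lemma inner_zero:
  assumes m: "max_chain P le z w m" and wz: "w \<noteq> z"
  shows "(\<Sum>j\<in>{j. j < length m \<and> noasc (take (Suc j) m) \<and> increasing lle lam (drop j m)}. (-1::int) ^ j) = 0"
proof -
  have ms: "sat_chain P le m" "hd m = z" "last m = w" using m unfolding max_chain_def by auto
  have wP: "w \<in> P" using max_chain_ends[OF m] by simp
  have lm: "length m = Suc (rho w)" using zchain_len[OF ms(1,2)] ms(3) by simp
  define n where "n = length m - 1"
  have n0: "0 < n" using rho_pos[OF wP wz] lm n_def by simp
  have "{j. j < length m \<and> noasc (take (Suc j) m) \<and> increasing lle lam (drop j m)} =
        {j. j \<le> n \<and> (\<forall>i. 0 < i \<and> i < j \<longrightarrow> \<not> ascent lle lam m i) \<and> (\<forall>i. j < i \<and> i < n \<longrightarrow> ascent lle lam m i)}"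
  proof (rule Collect_cong)
    fix j
    show "(j < length m \<and> noasc (take (Suc j) m) \<and> increasing lle lam (drop j m)) \<longleftrightarrow>
          (j \<le> n \<and> (\<forall>i. 0 < i \<and> i < j \<longrightarrow> \<not> ascent lle lam m i) \<and> (\<forall>i. j < i \<and> i < n \<longrightarrow> ascent lle lam m i))"
    proof (cases "j < length m")
      case True
      then show ?thesis using noasc_take[OF True] increasing_drop[OF ms(1) True] n_def lm by auto
    next
      case False then show ?thesis using n_def lm by auto
    qed
  qed
  then show ?thesis using alt_sum_zero[OF n0, of "ascent lle lam m"] by simp
qed

lemma sum_P:
  assumes wP: "w \<in> P" and wz: "w \<noteq> z"
  shows "(\<Sum>u\<in>{u\<in>P. le z u \<and> le u w}. (-1::int) ^ (rho u) * int (card (AF u))) = 0"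
proof -
  define I where "I = {u\<in>P. le z u \<and> le u w}"
  define D where "D = {c \<in> CPz. le (last c) w \<and> noasc c}"
  define h where "h = (\<lambda>c::'a list. (-1::int) ^ (length c - 1))"
  have fD: "finite D" by (rule finite_subset[OF _ finite_CP]) (auto simp: D_def)
  have fI: "finite I" using finP I_def by auto
  have AFD: "{c \<in> D. last c = u} = AF u" if u: "u \<in> I" for u
    using u unfolding D_def AF_def I_def max_chain_def CP_iff by auto
  have inner: "(\<Sum>c\<in>AF u. h c) = (-1::int) ^ (rho u) * int (card (AF u))" for u
  proof -
    have "(\<Sum>c\<in>AF u. h c) = (\<Sum>c\<in>AF u. (-1::int) ^ (rho u))"
    proof (rule sum.cong[OF refl])
      fix c assume "c \<in> AF u"
      then have "length c = Suc (rho u)" unfolding AF_def max_chain_def using zchain_len by auto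
      then show "h c = (-1) ^ rho u" unfolding h_def by simp
    qed
    then show ?thesis by simp
  qed
  have step1: "(\<Sum>u\<in>I. (-1::int) ^ (rho u) * int (card (AF u))) = (\<Sum>c\<in>D. h c)"
  proof -
    have "(\<Sum>u\<in>I. (-1::int) ^ (rho u) * int (card (AF u))) = (\<Sum>u\<in>I. \<Sum>c\<in>{c \<in> D. last c = u}. h c)"
      using AFD inner by simp
    also have "\<dots> = (\<Sum>c\<in>D. h c)"
    proof (rule sum.group[OF fD fI])
      show "last ` D \<subseteq> I"
      proof
        fix u assume "u \<in> last ` D"
        then obtain c where c: "c \<in> D" "u = last c" by blast
        then have cs: "sat_chain P le c" "c \<noteq> []" using D_def CP_iff sat_chainD by auto
        have "last c \<in> P" using sat_chainD(2)[OF cs(1)] last_in_set[OF cs(2)] by blast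
        then show "u \<in> I" using c zle unfolding I_def D_def by auto
      qed
    qed
    finally show ?thesis .
  qed
  define V where "V = {(m, j). max_chain P le z w m \<and> j < length m \<and> noasc (take (Suc j) m) \<and> increasing lle lam (drop j m)}"
  define \<phi> where "\<phi> = (\<lambda>c. (c @ tl (inc (last c) w), length c - 1))"
  have phi: "\<phi> c \<in> V \<and> take (length c) (fst (\<phi> c)) = c" if c: "c \<in> D" for c
  proof -
    have cs: "sat_chain P le c" "hd c = z" "le (last c) w" "noasc c" "c \<noteq> []"
      using c D_def CP_iff sat_chainD by auto
    have uP: "last c \<in> P" using sat_chainD(2)[OF cs(1)] last_in_set[OF cs(5)] by blast
    define s where "s = inc (last c) w"
    have s: "max_chain P le (last c) w s" "increasing lle lam s" using inc_props[OF uP wP cs(3)] s_def by auto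
    have ss: "sat_chain P le s" "hd s = last c" "last s = w" "s \<noteq> []" using s(1) unfolding max_chain_def
      using sat_chainD by auto
    define m where "m = c @ tl s"
    have mm: "max_chain P le z w m" unfolding max_chain_def m_def
      using sat_chain_append[of P le c s] cs ss last_join[of c s] by auto
    have tk: "take (Suc (length c - 1)) m = c" using cs(5) m_def by simp
    have dr: "drop (length c - 1) m = s" using drop_join[OF cs(5) ss(4) ss(2)[symmetric]] m_def by simp
    have "length c > 0" using cs(5) by simp
    then have jl: "length c - 1 < length m" unfolding m_def length_append length_tl by linarith
    have "(m, length c - 1) \<in> V" unfolding V_def using mm tk dr jl cs(4) s(2) by simp
    moreover have "\<phi> c = (m, length c - 1)" unfolding \<phi>_def m_def s_def by simp
    ultimately show ?thesis using m_def by simp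
  qed
  have bij: "bij_betw \<phi> D V"
  proof (rule bij_betw_imageI)
    show "inj_on \<phi> D"
    proof (rule inj_onI)
      fix c c' assume cc: "c \<in> D" "c' \<in> D" "\<phi> c = \<phi> c'"
      have ne: "c \<noteq> []" "c' \<noteq> []" using cc D_def CP_iff sat_chainD by auto
      have "length c - 1 = length c' - 1" using cc(3) unfolding \<phi>_def by simp
      moreover have "length c > 0" "length c' > 0" using ne by auto
      ultimately have "length c = length c'" by linarith
      then show "c = c'" using phi[OF cc(1)] phi[OF cc(2)] cc(3) by metis
    qed
    show "\<phi> ` D = V"
    proof
      show "\<phi> ` D \<subseteq> V" using phi by auto
      show "V \<subseteq> \<phi> ` D"
      proof
        fix p assume "p \<in> V"
        then obtain m j where p: "p = (m, j)" "max_chain P le z w m" "j < length m"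
          "noasc (take (Suc j) m)" "increasing lle lam (drop j m)" unfolding V_def by blast
        have ms: "sat_chain P le m" "hd m = z" "last m = w" using p(2) unfolding max_chain_def by auto
        define c where "c = take (Suc j) m"
        have cs: "sat_chain P le c" "hd c = z" "last c = m ! j" "length c = Suc j"
          using sat_chain_take[OF ms(1) p(3)] ms(2) last_take_Suc[OF p(3)] p(3) unfolding c_def
          by (auto simp: hd_conv_nth)
        have mne: "m \<noteq> []" using ms(1) sat_chainD by auto
        have le: "le (m ! j) w" using sat_chain_le[OF po ms(1), of j "length m - 1"] p(3) ms(3) mne
          by (simp add: last_conv_nth)
        have cD: "c \<in> D" unfolding D_def CP_iff using cs le p(4) c_def by simp
        have dm: "max_chain P le (m ! j) w (drop j m)"
          unfolding max_chain_def using sat_chain_drop[OF ms(1) p(3)] hd_drop_nth[OF p(3)] ms(3) p(3) by simp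
        have "drop j m = inc (m ! j) w" using inc_unique[OF dm p(5)] .
        then have "\<phi> c = (c @ tl (drop j m), j)" unfolding \<phi>_def using cs by simp
        also have "\<dots> = p" using take_drop_join[OF p(3)] p(1) c_def by simp
        finally show "p \<in> \<phi> ` D" using cD by (metis image_eqI)
      qed
    qed
  qed
  have step2: "(\<Sum>c\<in>D. h c) = (\<Sum>(m, j)\<in>V. (-1::int) ^ j)"
  proof -
    have "(\<Sum>c\<in>D. h c) = (\<Sum>c\<in>D. (\<lambda>(m, j). (-1::int) ^ j) (\<phi> c))"
      unfolding h_def \<phi>_def by simp
    also have "\<dots> = (\<Sum>(m, j)\<in>V. (-1::int) ^ j)" using sum.reindex_bij_betw[OF bij] .
    finally show ?thesis .
  qed
  define M where "M = {m. max_chain P le z w m}"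
  define Vm where "Vm = (\<lambda>m. {j. j < length m \<and> noasc (take (Suc j) m) \<and> increasing lle lam (drop j m)})"
  have VS: "V = Sigma M Vm" unfolding V_def M_def Vm_def by auto
  have fM: "finite M" by (rule finite_subset[OF _ finite_CP]) (auto simp: M_def max_chain_def CP_def)
  have fVm: "\<forall>m\<in>M. finite (Vm m)" unfolding Vm_def by auto
  have "(\<Sum>(m, j)\<in>V. (-1::int) ^ j) = (\<Sum>m\<in>M. \<Sum>j\<in>Vm m. (-1::int) ^ j)"
    unfolding VS using sum.Sigma[OF fM fVm, of "\<lambda>m j. (-1::int) ^ j"] by simp
  also have "\<dots> = 0"
  proof (rule sum.neutral, rule ballI)
    fix m assume "m \<in> M"
    then show "(\<Sum>j\<in>Vm m. (-1::int) ^ j) = 0" using inner_zero[OF _ wz] M_def Vm_def by simp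
  qed
  finally show ?thesis using step1 step2 I_def by simp
qed

lemma mobius_P:
  assumes xP: "x \<in> P"
  shows "mobius P le z x = (-1) ^ (rho x) * int (card (AF x))"
proof -
  define g where "g = (\<lambda>u. if u \<in> P then (-1::int) ^ (rho u) * int (card (AF u)) else 0)"
  have "mobius P le z x = g x"
  proof (rule mobius_eqI[OF finP po zP])
    fix w assume "g w \<noteq> 0" then show "w \<in> P \<and> le z w" unfolding g_def using zle by (auto split: if_splits)
  next
    fix w assume w: "w \<in> P" "le z w"
    have "(\<Sum>u\<in>{u\<in>P. le z u \<and> le u w}. g u) = (\<Sum>u\<in>{u\<in>P. le z u \<and> le u w}. (-1::int) ^ (rho u) * int (card (AF u)))"
      unfolding g_def by (rule sum.cong) auto
    also have "\<dots> = (if w = z then 1 else 0)"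
    proof (cases "w = z")
      case True
      then have "{u\<in>P. le z u \<and> le u w} = {z}" using zP porderD(1,2)[OF po] by auto
      then show ?thesis using True AF_z rho_props(1) by simp
    next
      case False then show ?thesis using sum_P[OF w(1) False] by simp
    qed
    finally show "(\<Sum>u\<in>{u\<in>P. le z u \<and> le u w}. g u) = (if w = z then 1 else 0)" .
  qed
  then show ?thesis using xP g_def by simp
qed

end


context ew begin

lemma inc_zz: "inc z z = [z]"
  using inc_props[OF zP zP porderD(1)[OF po zP]] max_chain_refl by blast

lemma increasing_take:
  assumes c: "sat_chain P le c" and j: "j < length c"
  shows "increasing lle lam (take (Suc j) c) \<longleftrightarrow> (\<forall>i. 0 < i \<and> i < j \<longrightarrow> ascent lle lam c i)"
proof -
  have s: "sat_chain P le (take (Suc j) c)" using sat_chain_take[OF c j] .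
  have lt: "length (take (Suc j) c) = Suc j" using j by simp
  have "increasing lle lam (take (Suc j) c) \<longleftrightarrow>
        (\<forall>i. 0 < i \<and> Suc i < length (take (Suc j) c) \<longrightarrow> ascent lle lam (take (Suc j) c) i)"
    using increasing_iff[OF s] .
  also have "\<dots> \<longleftrightarrow> (\<forall>i. 0 < i \<and> i < j \<longrightarrow> ascent lle lam c i)"
  proof
    assume h: "\<forall>i. 0 < i \<and> Suc i < length (take (Suc j) c) \<longrightarrow> ascent lle lam (take (Suc j) c) i"
    show "\<forall>i. 0 < i \<and> i < j \<longrightarrow> ascent lle lam c i"
    proof (intro allI impI)
      fix i assume i: "0 < i \<and> i < j"
      then have "Suc i < length (take (Suc j) c)" using lt by simp
      then have "ascent lle lam (take (Suc j) c) i" using h i by blast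
      moreover have "i < j" using i by blast
      ultimately show "ascent lle lam c i" using ascent_take[of i j c] by blast
    qed
  next
    assume h: "\<forall>i. 0 < i \<and> i < j \<longrightarrow> ascent lle lam c i"
    show "\<forall>i. 0 < i \<and> Suc i < length (take (Suc j) c) \<longrightarrow> ascent lle lam (take (Suc j) c) i"
    proof (intro allI impI)
      fix i assume i: "0 < i \<and> Suc i < length (take (Suc j) c)"
      then have ij: "i < j" using lt by simp
      then have "ascent lle lam c i" using h i by blast
      then show "ascent lle lam (take (Suc j) c) i" using ascent_take[of i j c] ij by blast
    qed
  qed
  finally show ?thesis .
qed

lemma inner_zero_Q:
  assumes c: "c \<in> CPz" and n: "1 < length c"
  shows "(\<Sum>j\<in>{j. j < length c \<and> increasing lle lam (take (Suc j) c) \<and> NF j c}. (-1::int) ^ j) = 0"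
proof -
  have cs: "sat_chain P le c" using c CP_iff by simp
  define n where "n = length c - 1"
  have n0: "0 < n" using n n_def by simp
  have "{j. j < length c \<and> increasing lle lam (take (Suc j) c) \<and> NF j c} =
        {j. j \<le> n \<and> (\<forall>i. 0 < i \<and> i < j \<longrightarrow> \<not> \<not> ascent lle lam c i) \<and> (\<forall>i. j < i \<and> i < n \<longrightarrow> \<not> ascent lle lam c i)}"
  proof (rule Collect_cong)
    fix j
    have nf: "NF j c \<longleftrightarrow> (\<forall>i. j < i \<and> i < n \<longrightarrow> \<not> ascent lle lam c i)"
    proof
      assume "NF j c" then show "\<forall>i. j < i \<and> i < n \<longrightarrow> \<not> ascent lle lam c i" unfolding NF_def by blast
    next
      assume h: "\<forall>i. j < i \<and> i < n \<longrightarrow> \<not> ascent lle lam c i"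
      show "NF j c" unfolding NF_def
      proof (intro allI impI notI)
        fix i assume "j < i" and a: "ascent lle lam c i"
        then have "i < n" unfolding ascent_def n_def by auto
        then show False using h \<open>j < i\<close> a by blast
      qed
    qed
    show "(j < length c \<and> increasing lle lam (take (Suc j) c) \<and> NF j c) \<longleftrightarrow>
          (j \<le> n \<and> (\<forall>i. 0 < i \<and> i < j \<longrightarrow> \<not> \<not> ascent lle lam c i) \<and> (\<forall>i. j < i \<and> i < n \<longrightarrow> \<not> ascent lle lam c i))"
    proof (cases "j < length c")
      case True
      then show ?thesis using increasing_take[OF cs True] nf n_def by auto
    next
      case False then show ?thesis using n_def n by auto
    qed
  qed
  then show ?thesis using alt_sum_zero[OF n0, of "\<lambda>i. \<not> ascent lle lam c i"] by simp
qed

definition fQ :: "'a list set \<Rightarrow> int" where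
  "fQ X = (if X \<in> Qc then (if inc z (topQ X) \<in> X then (-1) ^ (rkQ X) else 0) else 0)"

lemma topQ_P: "X \<in> Qc \<Longrightarrow> topQ X \<in> P"
proof -
  assume X: "X \<in> Qc"
  obtain c where c: "c \<in> X" using Qc_ne[OF X] by blast
  have cs: "sat_chain P le c" "c \<noteq> []" using Qc_mem[OF X c] CP_iff sat_chainD by auto
  have "last c \<in> P" using sat_chainD(2)[OF cs(1)] last_in_set[OF cs(2)] by blast
  then show ?thesis using topQ[OF X c] by simp
qed

lemma sum_Q:
  assumes Y: "Y \<in> Qc" and Yz: "Y \<noteq> {[z]}"
  shows "(\<Sum>X\<in>{X\<in>Qc. QL {[z]} X \<and> QL X Y}. fQ X) = 0"
proof -
  define B where "B = {X\<in>Qc. QL {[z]} X \<and> QL X Y}"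
  define Dq where "Dq = {X\<in>B. inc z (topQ X) \<in> X}"
  have fB: "finite B" using finite_subset[OF _ finite_Qc] B_def by auto
  have s1: "(\<Sum>X\<in>B. fQ X) = (\<Sum>X\<in>Dq. (-1::int) ^ (rkQ X))"
  proof -
    have "(\<Sum>X\<in>B. fQ X) = (\<Sum>X\<in>Dq. fQ X)"
      by (rule sum.mono_neutral_right[OF fB]) (auto simp: Dq_def fQ_def B_def)
    also have "\<dots> = (\<Sum>X\<in>Dq. (-1::int) ^ (rkQ X))"
      by (rule sum.cong) (auto simp: Dq_def fQ_def B_def)
    finally show ?thesis .
  qed
  define V where "V = {(c, j). c \<in> Y \<and> j < length c \<and> increasing lle lam (take (Suc j) c) \<and> NF j c}"
  define \<psi> where "\<psi> = (\<lambda>(c::'a list, j::nat). cls (take (Suc j) c))"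
  have psi: "\<psi> (c, j) \<in> Dq \<and> rkQ (\<psi> (c, j)) = j \<and> take (Suc j) c = inc z (c ! j)" if cj: "(c, j) \<in> V" for c j
  proof -
    have c: "c \<in> Y" "j < length c" "increasing lle lam (take (Suc j) c)" "NF j c" using cj V_def by auto
    have cC: "c \<in> CPz" using Qc_mem[OF Y c(1)] by simp
    have cs: "sat_chain P le c" "hd c = z" using cC CP_iff by auto
    define p where "p = take (Suc j) c"
    have ps: "sat_chain P le p" "hd p = z" "last p = c ! j" "length p = Suc j"
      using sat_chain_take[OF cs(1) c(2)] cs(2) last_take_Suc[OF c(2)] c(2) unfolding p_def
      by (auto simp: hd_conv_nth)
    have pC: "p \<in> CPz" using ps CP_iff by simp
    have pinc: "p = inc z (c ! j)"
      using inc_unique[of z "c ! j" p] ps c(3) p_def unfolding max_chain_def by simp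
    have XQ: "cls p \<in> Qc" using cls_in_Qc[OF pC] .
    have pX: "p \<in> cls p" using cls_self[OF pC] .
    have tp: "topQ (cls p) = c ! j" "rkQ (cls p) = j" using topQ[OF XQ pX] ps by auto
    have "take (length p) c = p" using ps(4) p_def by simp
    then have "QL (cls p) Y" using QL_iff XQ Y pX c(1) by blast
    moreover have "QL {[z]} (cls p)" using QL_z[OF XQ] .
    ultimately have "cls p \<in> Dq" unfolding Dq_def B_def using XQ tp pinc pX by simp
    then show ?thesis using tp pinc unfolding \<psi>_def p_def by simp
  qed
  have bij: "bij_betw \<psi> V Dq"
  proof (rule bij_betw_imageI)
    show "inj_on \<psi> V"
    proof (rule inj_onI)
      fix a b assume ab: "a \<in> V" "b \<in> V" "\<psi> a = \<psi> b"
      obtain c j where a: "a = (c, j)" by (cases a)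
      obtain c' j' where b: "b = (c', j')" by (cases b)
      have c: "c \<in> Y" "j < length c" "NF j c" using ab(1) a V_def by auto
      have c': "c' \<in> Y" "j' < length c'" "NF j' c'" using ab(2) b V_def by auto
      have jj: "j = j'" using psi[of c j] psi[of c' j'] ab a b by metis
      have cC: "c \<in> CPz" "c' \<in> CPz" using Qc_mem Y c(1) c'(1) by auto
      have lc: "last c = last c'" using Qc_same[OF Y c(1) c'(1)] by simp
      have cc': "c ! j = c' ! j"
      proof -
        have "topQ (\<psi> (c, j)) = topQ (\<psi> (c', j'))" using ab a b by simp
        moreover have "topQ (\<psi> (c, j)) = c ! j"
        proof -
          have "take (Suc j) c \<in> CPz" using sat_chain_take[of P le c j] cC c CP_iff by (auto simp: hd_conv_nth)
          then show ?thesis unfolding \<psi>_def using topQ(1)[OF cls_in_Qc cls_self] last_take_Suc[OF c(2)] by simp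
        qed
        moreover have "topQ (\<psi> (c', j')) = c' ! j'"
        proof -
          have "take (Suc j') c' \<in> CPz" using sat_chain_take[of P le c' j'] cC c' CP_iff by (auto simp: hd_conv_nth)
          then show ?thesis unfolding \<psi>_def using topQ(1)[OF cls_in_Qc cls_self] last_take_Suc[OF c'(2)] by simp
        qed
        ultimately show ?thesis using jj by simp
      qed
      have tk: "take (Suc j) c = take (Suc j) c'" using psi[of c j] psi[of c' j'] ab a b jj cc' by simp
      have "(S 0)\<^sup>*\<^sup>* c c'" using Qc_same[OF Y c(1) c'(1)] by simp
      then have "(S j)\<^sup>*\<^sup>* c c'" using prefix_cancel[OF cC lc _ c(2) tk] by simp
      then have "c = c'" using stp_CR_nf c(3) c'(3) jj by blast
      then show "a = b" using a b jj by simp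
    qed
    show "\<psi> ` V = Dq"
    proof
      show "\<psi> ` V \<subseteq> Dq" using psi by auto
      show "Dq \<subseteq> \<psi> ` V"
      proof
        fix X assume X: "X \<in> Dq"
        have XQ: "X \<in> Qc" "QL X Y" "inc z (topQ X) \<in> X" using X Dq_def B_def by auto
        define t where "t = topQ X"
        define q where "q = inc z t"
        have qX: "q \<in> X" using XQ(3) q_def t_def by simp
        have qC: "q \<in> CPz" using Qc_mem[OF XQ(1) qX] by simp
        have qs: "sat_chain P le q" "hd q = z" "q \<noteq> []" using qC CP_iff sat_chainD by auto
        obtain x' y' where xy: "x' \<in> X" "y' \<in> Y" "take (length x') y' = x'" using XQ(2) QL_iff by blast
        have x'C: "x' \<in> CPz" using Qc_mem[OF XQ(1) xy(1)] by simp
        have y'C: "y' \<in> CPz" using Qc_mem[OF Y xy(2)] by simp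
        have y's: "sat_chain P le y'" "hd y' = z" using y'C CP_iff by auto
        have lq: "length q = length x'" "last q = last x'" using Qc_same[OF XQ(1) xy(1) qX] by auto
        have x'q: "(S 0)\<^sup>*\<^sup>* x' q" using Qc_same[OF XQ(1) xy(1) qX] by simp
        have lx: "length x' \<le> length y'" using xy(3) by (rule take_len_le)
        have x'ne: "x' \<noteq> []" using x'C CP_iff sat_chainD by auto
        then have jl: "length x' - 1 < length y'" using lx by (cases x') auto
        define r where "r = drop (length x' - 1) y'"
        have rs: "sat_chain P le r" unfolding r_def using sat_chain_drop[OF y's(1) jl] .
        have tx: "take (Suc (length x' - 1)) y' = x'" using xy(3) x'ne by (cases x') auto
        have hr: "hd r = last x'" unfolding r_def using hd_drop_nth[OF jl] last_take_Suc[OF jl] tx by simp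
        have ye: "x' @ tl r = y'" unfolding r_def using take_drop_join[OF jl] tx by simp
        have "(S 0)\<^sup>*\<^sup>* (x' @ tl r) (q @ tl r)" using lift_prefix[OF x'q x'C rs hr] .
        then have y'd: "(S 0)\<^sup>*\<^sup>* y' (q @ tl r)" using ye by simp
        define d where "d = q @ tl r"
        have dY: "d \<in> Y" using Qc_mem(2)[OF Y xy(2)] cls_mem y'C y'd d_def by auto
        have dC: "d \<in> CPz" using Qc_mem[OF Y dY] by simp
        define j where "j = length q - 1"
        have jq: "Suc j = length q" using qs j_def by simp
        have tkd: "take (Suc j) d = q" using jq d_def by simp
        obtain e where e: "(stp j)\<^sup>*\<^sup>* d e" "NF j e" using NF_exists[of d j] dC CP_iff by blast
        have "(S j)\<^sup>*\<^sup>* d e" using e(1) by (induction rule: rtranclp_induct) (auto intro: rtranclp.rtrancl_into_rtrancl)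
        then have eS: "(S 0)\<^sup>*\<^sup>* d e" "take (Suc j) e = take (Suc j) d" "length e = length d"
          using S_mono S_props[of j d e] dC by auto
        have eY: "e \<in> Y" using Qc_mem(2)[OF Y dY] cls_mem dC eS(1) by auto
        have ld: "length d \<ge> length q" using d_def by simp
        have jle: "j < length e" using eS(3) ld jq by simp
        have eq: "take (Suc j) e = q" using eS(2) tkd by simp
        have qinc: "increasing lle lam q" using inc_props(2)[of z t] zP topQ_P[OF XQ(1)] zle q_def t_def by simp
        have "(e, j) \<in> V" unfolding V_def using eY jle eq qinc e(2) by simp
        moreover have "\<psi> (e, j) = X" unfolding \<psi>_def using eq Qc_mem(2)[OF XQ(1) qX] by simp
        ultimately show "X \<in> \<psi> ` V" by (metis image_eqI)
      qed
    qed
  qed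
  have s2: "(\<Sum>X\<in>Dq. (-1::int) ^ (rkQ X)) = (\<Sum>(c, j)\<in>V. (-1::int) ^ j)"
  proof -
    have "(\<Sum>X\<in>Dq. (-1::int) ^ (rkQ X)) = (\<Sum>a\<in>V. (-1::int) ^ (rkQ (\<psi> a)))"
      using sum.reindex_bij_betw[OF bij, of "\<lambda>X. (-1::int) ^ (rkQ X)"] by simp
    also have "\<dots> = (\<Sum>(c, j)\<in>V. (-1::int) ^ j)"
      by (rule sum.cong[OF refl]) (use psi in auto)
    finally show ?thesis .
  qed
  define Vc where "Vc = (\<lambda>c. {j. j < length c \<and> increasing lle lam (take (Suc j) c) \<and> NF j c})"
  have VS: "V = Sigma Y Vc" unfolding V_def Vc_def by auto
  have fY: "finite Y" using finite_subset[OF _ finite_CP, of Y] Qc_mem(1)[OF Y] by blast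
  have fVc: "\<forall>c\<in>Y. finite (Vc c)" unfolding Vc_def by auto
  have rY: "0 < rkQ Y"
  proof (rule ccontr)
    assume "\<not> 0 < rkQ Y"
    then have "rkQ {[z]} = rkQ Y" using rkQ_z by simp
    then show False using QL_rk(2)[OF QL_z[OF Y]] Yz by simp
  qed
  have "(\<Sum>(c, j)\<in>V. (-1::int) ^ j) = (\<Sum>c\<in>Y. \<Sum>j\<in>Vc c. (-1::int) ^ j)"
    unfolding VS using sum.Sigma[OF fY fVc, of "\<lambda>c j. (-1::int) ^ j"] by simp
  also have "\<dots> = 0"
  proof (rule sum.neutral, rule ballI)
    fix c assume cY: "c \<in> Y"
    have "length c = Suc (rkQ Y)" using topQ[OF Y cY] by simp
    then have "1 < length c" using rY by simp
    then show "(\<Sum>j\<in>Vc c. (-1::int) ^ j) = 0" using inner_zero_Q[OF Qc_mem(1)[OF Y cY]] Vc_def by simp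
  qed
  finally show ?thesis using s1 s2 B_def by simp
qed

lemma mobius_Q:
  "mobius Qc QL {[z]} X = fQ X"
proof (rule mobius_eqI[OF finite_Qc porder_Q zQc])
  fix w assume "fQ w \<noteq> 0" then show "w \<in> Qc \<and> QL {[z]} w"
    unfolding fQ_def using QL_z by (auto split: if_splits)
next
  fix Y assume Y: "Y \<in> Qc" "QL {[z]} Y"
  show "(\<Sum>u\<in>{u\<in>Qc. QL {[z]} u \<and> QL u Y}. fQ u) = (if Y = {[z]} then 1 else 0)"
  proof (cases "Y = {[z]}")
    case True
    have "{u\<in>Qc. QL {[z]} u \<and> QL u Y} = {{[z]}}"
    proof
      show "{u\<in>Qc. QL {[z]} u \<and> QL u Y} \<subseteq> {{[z]}}"
      proof
        fix u assume u: "u \<in> {u\<in>Qc. QL {[z]} u \<and> QL u Y}"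
        then have "rkQ u \<le> rkQ Y" using QL_rk by auto
        then have "rkQ u = rkQ {[z]}" using True rkQ_z by simp
        then show "u \<in> {{[z]}}" using QL_rk(2)[of "{[z]}" u] u by auto
      qed
      show "{{[z]}} \<subseteq> {u\<in>Qc. QL {[z]} u \<and> QL u Y}" using zQc QL_z True by auto
    qed
    moreover have "fQ {[z]} = 1"
    proof -
      have "topQ {[z]} = z" using topQ(1)[OF zQc, of "[z]"] by simp
      then show ?thesis unfolding fQ_def using zQc inc_zz rkQ_z by simp
    qed
    ultimately show ?thesis using True by simp
  next
    case False then show ?thesis using sum_Q[OF Y(1) False] by simp
  qed
qed

end


context ew begin

lemma NF0_noasc: "NF 0 c \<longleftrightarrow> noasc c"
  unfolding NF_def noasc_def ascent_def by auto

lemma wP_eq: "whitney_w P le z k = (-1) ^ k * int (card {c \<in> CPz. length c = Suc k \<and> noasc c})"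
proof -
  define Pk where "Pk = {x\<in>P. rank P le z x = k}"
  define A where "A = {c \<in> CPz. length c = Suc k \<and> noasc c}"
  have Pk: "Pk = {x\<in>P. rho x = k}" using rank_P Pk_def by auto
  have "whitney_w P le z k = (\<Sum>x\<in>Pk. (-1) ^ k * int (card (AF x)))"
    unfolding whitney_w_def Pk_def[symmetric] by (rule sum.cong) (auto simp: Pk mobius_P)
  also have "\<dots> = (-1) ^ k * int (\<Sum>x\<in>Pk. card (AF x))" by (simp add: sum_distrib_left)
  also have "(\<Sum>x\<in>Pk. card (AF x)) = card A"
  proof -
    have fA: "finite A" by (rule finite_subset[OF _ finite_CP]) (auto simp: A_def)
    have fPk: "finite Pk" using finP Pk_def by auto
    have AF_eq: "AF x = {c \<in> A. last c = x}" if x: "x \<in> Pk" for x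
      using x zchain_len unfolding AF_def A_def Pk max_chain_def CP_iff by auto
    have "card A = (\<Sum>c\<in>A. 1)" by simp
    also have "\<dots> = (\<Sum>x\<in>Pk. \<Sum>c\<in>{c \<in> A. last c = x}. 1)"
    proof (rule sum.group[OF fA fPk, symmetric])
      show "last ` A \<subseteq> Pk"
      proof
        fix x assume "x \<in> last ` A"
        then obtain c where c: "c \<in> A" "x = last c" by blast
        then have cs: "sat_chain P le c" "hd c = z" "c \<noteq> []" "length c = Suc k"
          using A_def CP_iff sat_chainD by auto
        have "x \<in> P" using sat_chainD(2)[OF cs(1)] last_in_set[OF cs(3)] c by blast
        moreover have "rho x = k" using zchain_len[OF cs(1,2)] cs(4) c by simp
        ultimately show "x \<in> Pk" using Pk by simp
      qed
    qed
    also have "\<dots> = (\<Sum>x\<in>Pk. card (AF x))" using AF_eq by simp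
    finally show ?thesis by simp
  qed
  finally show ?thesis unfolding A_def by simp
qed

lemma WQ_eq: "whitney_W Qc QL {[z]} k = card {c \<in> CPz. length c = Suc k \<and> noasc c}"
proof -
  define A where "A = {c \<in> CPz. length c = Suc k \<and> noasc c}"
  have "{X\<in>Qc. rank Qc QL {[z]} X = k} = {X\<in>Qc. rkQ X = k}" using rank_Q by auto
  moreover have "cls ` A = {X\<in>Qc. rkQ X = k}"
  proof
    show "cls ` A \<subseteq> {X\<in>Qc. rkQ X = k}"
    proof
      fix X assume "X \<in> cls ` A"
      then obtain c where c: "c \<in> A" "X = cls c" by blast
      have cC: "c \<in> CPz" using c A_def by simp
      have "rkQ X = k" using topQ(2)[OF cls_in_Qc[OF cC] cls_self[OF cC]] c A_def by simp
      then show "X \<in> {X\<in>Qc. rkQ X = k}" using cls_in_Qc[OF cC] c by simp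
    qed
    show "{X\<in>Qc. rkQ X = k} \<subseteq> cls ` A"
    proof
      fix X assume X: "X \<in> {X\<in>Qc. rkQ X = k}"
      then have XQ: "X \<in> Qc" "rkQ X = k" by auto
      obtain c where c: "c \<in> X" using Qc_ne[OF XQ(1)] by blast
      have cC: "c \<in> CPz" using Qc_mem[OF XQ(1) c] by simp
      obtain d where d: "(stp 0)\<^sup>*\<^sup>* c d" "NF 0 d" using NF_exists[of c 0] cC CP_iff by blast
      have "(S 0)\<^sup>*\<^sup>* c d" using d(1) by (induction rule: rtranclp_induct) (auto intro: rtranclp.rtrancl_into_rtrancl)
      then have dX: "d \<in> X" using Qc_mem(2)[OF XQ(1) c] cls_mem cC by auto
      have dC: "d \<in> CPz" using Qc_mem[OF XQ(1) dX] by simp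
      have "length d = Suc k" using topQ(2)[OF XQ(1) dX] XQ by simp
      then have "d \<in> A" unfolding A_def using dC d(2) NF0_noasc by simp
      moreover have "X = cls d" using Qc_mem(2)[OF XQ(1) dX] .
      ultimately show "X \<in> cls ` A" by blast
    qed
  qed
  moreover have "inj_on cls A"
  proof (rule inj_onI)
    fix c d assume cd: "c \<in> A" "d \<in> A" "cls c = cls d"
    have C: "c \<in> CPz" "d \<in> CPz" using cd A_def by auto
    have "(S 0)\<^sup>*\<^sup>* c d" using cls_eq[OF C] cd(3) by simp
    moreover have "NF 0 c" "NF 0 d" using cd A_def NF0_noasc by auto
    ultimately show "c = d" using stp_CR_nf by blast
  qed
  ultimately show ?thesis unfolding whitney_W_def A_def[symmetric] by (metis card_image)
qed

lemma wQ_eq: "whitney_w Qc QL {[z]} k = (-1) ^ k * int (card {x\<in>P. rho x = k})"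
proof -
  define Qk where "Qk = {X\<in>Qc. rkQ X = k}"
  define E where "E = {X\<in>Qk. inc z (topQ X) \<in> X}"
  have fQk: "finite Qk" using finite_subset[OF _ finite_Qc] Qk_def by auto
  have "{X\<in>Qc. rank Qc QL {[z]} X = k} = Qk" using rank_Q Qk_def by auto
  then have "whitney_w Qc QL {[z]} k = (\<Sum>X\<in>Qk. fQ X)"
    unfolding whitney_w_def using mobius_Q by simp
  also have "\<dots> = (\<Sum>X\<in>E. fQ X)"
    by (rule sum.mono_neutral_right[OF fQk]) (auto simp: E_def fQ_def Qk_def)
  also have "\<dots> = (\<Sum>X\<in>E. (-1) ^ k)"
    by (rule sum.cong) (auto simp: E_def fQ_def Qk_def)
  also have "\<dots> = (-1) ^ k * int (card E)" by simp
  also have "card E = card {x\<in>P. rho x = k}"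
  proof -
    define g where "g = (\<lambda>x. cls (inc z x))"
    have incC: "inc z x \<in> CPz" "last (inc z x) = x" if "x \<in> P" for x
      using inc_props(1)[OF zP that zle[OF that]] unfolding max_chain_def CP_iff by auto
    have "g ` {x\<in>P. rho x = k} = E"
    proof
      show "g ` {x\<in>P. rho x = k} \<subseteq> E"
      proof
        fix X assume "X \<in> g ` {x\<in>P. rho x = k}"
        then obtain x where x: "x \<in> P" "rho x = k" "X = g x" by blast
        have XQ: "X \<in> Qc" "inc z x \<in> X" using cls_in_Qc cls_self incC[OF x(1)] x(3) g_def by auto
        have "topQ X = x" using topQ(1)[OF XQ] incC[OF x(1)] by simp
        then show "X \<in> E" using XQ x unfolding E_def Qk_def rkQ_def by simp
      qed
      show "E \<subseteq> g ` {x\<in>P. rho x = k}"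
      proof
        fix X assume X: "X \<in> E"
        then have XQ: "X \<in> Qc" "rkQ X = k" "inc z (topQ X) \<in> X" unfolding E_def Qk_def by auto
        have "X = g (topQ X)" using Qc_mem(2)[OF XQ(1) XQ(3)] g_def by simp
        moreover have "topQ X \<in> P" "rho (topQ X) = k" using topQ_P[OF XQ(1)] XQ(2) rkQ_def by auto
        ultimately show "X \<in> g ` {x\<in>P. rho x = k}" by blast
      qed
    qed
    moreover have "inj_on g {x\<in>P. rho x = k}"
    proof (rule inj_onI)
      fix x y assume xy: "x \<in> {x\<in>P. rho x = k}" "y \<in> {x\<in>P. rho x = k}" "g x = g y"
      have xP: "x \<in> P" "y \<in> P" using xy by auto
      have t1: "topQ (g x) = x"
        using topQ(1)[OF cls_in_Qc[OF incC(1)[OF xP(1)]] cls_self[OF incC(1)[OF xP(1)]]] incC(2)[OF xP(1)]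
        unfolding g_def by simp
      have t2: "topQ (g y) = y"
        using topQ(1)[OF cls_in_Qc[OF incC(1)[OF xP(2)]] cls_self[OF incC(1)[OF xP(2)]]] incC(2)[OF xP(2)]
        unfolding g_def by simp
      show "x = y" using t1 t2 xy(3) by metis
    qed
    ultimately show ?thesis by (metis card_image)
  qed
  finally show ?thesis .
qed

lemma WP_eq: "whitney_W P le z k = card {x\<in>P. rho x = k}"
  unfolding whitney_W_def using rank_P by (metis (mono_tags, lifting) Collect_cong)

theorem main:
  "graded_zero Qc QL {[z]} \<and> whitney_duals P le z Qc QL {[z]}"
proof
  show "graded_zero Qc QL {[z]}" using graded_Q .
  show "whitney_duals P le z Qc QL {[z]}"
    unfolding whitney_duals_def
  proof (intro allI conjI)
    fix k
    show "\<bar>whitney_w P le z k\<bar> = int (whitney_W Qc QL {[z]} k)"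
      using wP_eq WQ_eq by (simp add: abs_mult power_abs)
    show "\<bar>whitney_w Qc QL {[z]} k\<bar> = int (whitney_W P le z k)"
      using wQ_eq WP_eq by (simp add: abs_mult power_abs)
  qed
qed

end

theorem theorem3p27:
  fixes P :: "'a set" and le :: "'a \<Rightarrow> 'a \<Rightarrow> bool" and z :: 'a
    and L :: "'l set" and lle :: "'l \<Rightarrow> 'l \<Rightarrow> bool" and lam :: "'a \<Rightarrow> 'a \<Rightarrow> 'l"
  assumes "finite P"
    and "graded_zero P le z"
    and "porder L lle"
    and "\<forall>x y. covers P le x y \<longrightarrow> lam x y \<in> L"
    and "generalized_EW_labeling P le z lle lam"
  shows "graded_zero (Qcarrier P le z lle lam) (Qle P le z lle lam) {[z]} \<and>
         whitney_duals P le z (Qcarrier P le z lle lam) (Qle P le z lle lam) {[z]}"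
proof -
  interpret ew P le z L lle lam using assms by unfold_locales
  show ?thesis using main .
qed


end
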